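(* For all $n,d\ge1$ and $k\ge0$, the poset $\Pi_n^{1,d}$ is ranked, and $$W_k(\Pi_n^{1,d}) = {n \brace n-kd}_{\{1,d+1,2d+1,\dots\}},\qquad w_k(\Pi_n^{1,d}) = {n \brace n-kd}^{-1}_{\{1,d+1,2d+1,\dots\}}.$$ In particular, $w_k(\Pi_n^{1,d})$ is $(-1)^k$ times the number of forests consisting of an unordered collection of $n-kd$ rooted trees with ordered children, with $n$ leaves in total labeled bijectively by $[n]$ so that in each set of siblings $\ell_{\max}$ increases from left to right, in which every vertex has $0$ or $d+1$ children and every left-most child is a leaf.
   Context: $\Pi_n^{1,d}$ is the set of all set partitions of $[n]$ in which every block has size congruent to $1 \bmod d$, ordered by refinement ($\sigma\le\tau$ iff every block of $\sigma$ is contained in a block of $\tau$); its minimum is the partition into singletons. For a finite ranked poset $P$ with minimum $0$, the $k$th Whitney number of the second kind $W_k(P)$ is the number of elements of rank $k$, and the $k$th Whitney number of the first kind is $w_k(P)=\sum_{x:\,\mathrm{rank}(x)=k}\mu(0,x)$ with $\mu$ the Möbius function of $P$. For $S\subseteq\mathbb N$, ${n \brace m}_S$ is the number of partitions of $[n]$ into $m$ nonempty blocks each of size in $S$ (taken to be $0$ if $m\le 0$), and ${n \brace m}^{-1}_S$ is the $(n,m)$ entry of the inverse of the infinite lower-triangular matrix $[{n \brace m}_S]_{n,m\ge1}$ (taken $0$ if $m\le0$). Leaves are vertices with no children (isolated roots count as leaves); $\ell_{\max}(v)$ is the maximum label among leaves descended from $v$. *)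

theory Defs
  imports Main "HOL-Library.Disjoint_Sets"
begin

definition covers :: "'a set \<Rightarrow> ('a \<Rightarrow> 'a \<Rightarrow> bool) \<Rightarrow> 'a \<Rightarrow> 'a \<Rightarrow> bool" where
  "covers A le x y \<longleftrightarrow> x \<in> A \<and> y \<in> A \<and> le x y \<and> x \<noteq> y \<and>
     \<not> (\<exists>w\<in>A. le x w \<and> le w y \<and> w \<noteq> x \<and> w \<noteq> y)"

definition rank_fun :: "'a set \<Rightarrow> ('a \<Rightarrow> 'a \<Rightarrow> bool) \<Rightarrow> 'a \<Rightarrow> ('a \<Rightarrow> nat) \<Rightarrow> bool" where
  "rank_fun A le z \<rho> \<longleftrightarrow> \<rho> z = 0 \<and> (\<forall>x y. covers A le x y \<longrightarrow> \<rho> y = \<rho> x + 1)"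

definition ranked :: "'a set \<Rightarrow> ('a \<Rightarrow> 'a \<Rightarrow> bool) \<Rightarrow> 'a \<Rightarrow> bool" where
  "ranked A le z \<longleftrightarrow> (\<exists>\<rho>. rank_fun A le z \<rho>)"

definition is_mobius :: "'a set \<Rightarrow> ('a \<Rightarrow> 'a \<Rightarrow> bool) \<Rightarrow> ('a \<Rightarrow> 'a \<Rightarrow> int) \<Rightarrow> bool" where
  "is_mobius A le f \<longleftrightarrow>
     (\<forall>x\<in>A. f x x = 1) \<and>
     (\<forall>x\<in>A. \<forall>y\<in>A. le x y \<and> x \<noteq> y \<longrightarrow> (\<Sum>w\<in>{w\<in>A. le x w \<and> le w y}. f x w) = 0) \<and>
     (\<forall>x y. \<not> (x \<in> A \<and> y \<in> A \<and> le x y) \<longrightarrow> f x y = 0)"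

definition mobius :: "'a set \<Rightarrow> ('a \<Rightarrow> 'a \<Rightarrow> bool) \<Rightarrow> 'a \<Rightarrow> 'a \<Rightarrow> int" where
  "mobius A le = (THE f. is_mobius A le f)"

definition Pi1d :: "nat \<Rightarrow> nat \<Rightarrow> nat set set set" where
  "Pi1d n d = {P. partition_on {1..n} P \<and> (\<forall>B\<in>P. card B mod d = 1 mod d)}"

definition refines :: "'a set set \<Rightarrow> 'a set set \<Rightarrow> bool" where
  "refines \<sigma> \<tau> \<longleftrightarrow> (\<forall>B\<in>\<sigma>. \<exists>C\<in>\<tau>. B \<subseteq> C)"

definition singletons :: "nat \<Rightarrow> nat set set" where
  "singletons n = (\<lambda>i. {i}) ` {1..n}"

definition stirS :: "nat set \<Rightarrow> nat \<Rightarrow> nat \<Rightarrow> nat" where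
  "stirS S n m = card {P. partition_on {1..n} P \<and> card P = m \<and> (\<forall>B\<in>P. card B \<in> S)}"

definition stirS_int :: "nat set \<Rightarrow> nat \<Rightarrow> int \<Rightarrow> int" where
  "stirS_int S n m = (if m \<le> 0 then 0 else int (stirS S n (nat m)))"

text \<open>T is the inverse of the infinite lower-triangular matrix [stirS S n m]_{n,m>=1}.\<close>
definition is_stir_inv :: "nat set \<Rightarrow> (nat \<Rightarrow> nat \<Rightarrow> int) \<Rightarrow> bool" where
  "is_stir_inv S T \<longleftrightarrow>
     (\<forall>i j. (j < 1 \<or> i < 1 \<or> i < j) \<longrightarrow> T i j = 0) \<and>
     (\<forall>i j. 1 \<le> i \<longrightarrow> 1 \<le> j \<longrightarrow>
        (\<Sum>l\<in>{1..i}. int (stirS S i l) * T l j) = (if i = j then 1 else 0))"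

definition stir_inv :: "nat set \<Rightarrow> nat \<Rightarrow> int \<Rightarrow> int" where
  "stir_inv S n m = (if m \<le> 0 then 0 else (THE T. is_stir_inv S T) n (nat m))"

datatype ltree = Leaf nat | Node "ltree list"

primrec leaves :: "ltree \<Rightarrow> nat list" where
  "leaves (Leaf i) = [i]"
| "leaves (Node ts) = concat (map leaves ts)"

definition lmax :: "ltree \<Rightarrow> nat" where
  "lmax t = Max (set (leaves t))"

primrec is_leaf :: "ltree \<Rightarrow> bool" where
  "is_leaf (Leaf i) = True"
| "is_leaf (Node ts) = False"

fun good_tree :: "nat \<Rightarrow> ltree \<Rightarrow> bool" where
  "good_tree d (Leaf i) = True"
| "good_tree d (Node ts) =
     (length ts = d + 1 \<and> is_leaf (hd ts) \<and> sorted_wrt (<) (map lmax ts) \<and>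
      (\<forall>t\<in>set ts. good_tree d t))"

definition good_forests :: "nat \<Rightarrow> nat \<Rightarrow> nat \<Rightarrow> ltree set set" where
  "good_forests n d k = {F. finite F \<and> int (card F) = int n - int (k * d) \<and>
      (\<forall>t\<in>F. good_tree d t \<and> distinct (leaves t)) \<and>
      disjoint_family_on (\<lambda>t. set (leaves t)) F \<and>
      (\<Union>t\<in>F. set (leaves t)) = {1..n}}"

end

theory Submission
  imports Defs
begin

primrec mu_f :: "nat \<Rightarrow> 'a set \<Rightarrow> ('a \<Rightarrow> 'a \<Rightarrow> bool) \<Rightarrow> 'a \<Rightarrow> 'a \<Rightarrow> int" where
  "mu_f 0 A le x y = 0"
| "mu_f (Suc k) A le x y = (if x \<in> A \<and> y \<in> A \<and> le x y then
      (if x = y then 1 else - (\<Sum>w\<in>{w\<in>A. le x w \<and> le w y \<and> w \<noteq> y}. mu_f k A le x w)) else 0)"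

locale fposet =
  fixes A :: "'a set" and le :: "'a \<Rightarrow> 'a \<Rightarrow> bool"
  assumes fin: "finite A"
    and refl: "\<And>x. x \<in> A \<Longrightarrow> le x x"
    and antisym: "\<And>x y. x \<in> A \<Longrightarrow> y \<in> A \<Longrightarrow> le x y \<Longrightarrow> le y x \<Longrightarrow> x = y"
    and trans: "\<And>x y z. x \<in> A \<Longrightarrow> y \<in> A \<Longrightarrow> z \<in> A \<Longrightarrow> le x y \<Longrightarrow> le y z \<Longrightarrow> le x z"
begin

definition hh :: "'a \<Rightarrow> 'a \<Rightarrow> nat" where
  "hh x y = card {w\<in>A. le x w \<and> le w y \<and> w \<noteq> y}"

lemma hh_less:
  assumes "x \<in> A" "y \<in> A" "w \<in> A" "le x w" "le w y" "w \<noteq> y"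
  shows "hh x w < hh x y"
  unfolding hh_def
proof (rule psubset_card_mono)
  show "finite {w \<in> A. le x w \<and> le w y \<and> w \<noteq> y}" using fin by auto
  have "{wa \<in> A. le x wa \<and> le wa w \<and> wa \<noteq> w} \<subseteq> {w \<in> A. le x w \<and> le w y \<and> w \<noteq> y}"
    using assms trans antisym by blast
  moreover have "w \<in> {w \<in> A. le x w \<and> le w y \<and> w \<noteq> y}" using assms by auto
  ultimately show "{wa \<in> A. le x wa \<and> le wa w \<and> wa \<noteq> w} \<subset> {w \<in> A. le x w \<and> le w y \<and> w \<noteq> y}"
    by auto
qed

lemma hh_bound: "y \<in> A \<Longrightarrow> hh x y < card A"
  unfolding hh_def
  by (rule psubset_card_mono) (use fin in auto)

lemma mu_f_stable:
  "\<forall>k k'. k > hh x y \<longrightarrow> k' > hh x y \<longrightarrow> mu_f k A le x y = mu_f k' A le x y"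
proof (induction "hh x y" arbitrary: y rule: less_induct)
  case less
  show ?case
  proof (intro allI impI)
    fix k k' assume kk: "k > hh x y" "k' > hh x y"
    define k0 where "k0 = k - 1"
    define k0' where "k0' = k' - 1"
    have k0: "k = Suc k0" "k' = Suc k0'" using kk unfolding k0_def k0'_def by auto
    have "(\<Sum>w\<in>{w\<in>A. le x w \<and> le w y \<and> w \<noteq> y}. mu_f k0 A le x w)
        = (\<Sum>w\<in>{w\<in>A. le x w \<and> le w y \<and> w \<noteq> y}. mu_f k0' A le x w)"
      if "x \<in> A" "y \<in> A"
    proof (rule sum.cong)
      fix w assume w: "w \<in> {w\<in>A. le x w \<and> le w y \<and> w \<noteq> y}"
      hence lt: "hh x w < hh x y" using hh_less that by auto
      have IH: "\<forall>k k'. k > hh x w \<longrightarrow> k' > hh x w \<longrightarrow> mu_f k A le x w = mu_f k' A le x w"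
        using less.hyps[OF lt] .
      show "mu_f k0 A le x w = mu_f k0' A le x w"
        by (rule IH[rule_format]) (use kk k0 lt in auto)
    qed auto
    then show "mu_f k A le x y = mu_f k' A le x y" using k0 by auto
  qed
qed

definition mu0 :: "'a \<Rightarrow> 'a \<Rightarrow> int" where
  "mu0 x y = mu_f (Suc (card A)) A le x y"

lemma mu0_is_mobius: "is_mobius A le mu0"
  unfolding is_mobius_def
proof (intro conjI ballI allI impI)
  fix x assume "x \<in> A" thus "mu0 x x = 1" by (simp add: mu0_def refl)
next
  fix x y assume xy: "x \<in> A" "y \<in> A" "le x y \<and> x \<noteq> y"
  let ?I = "{w\<in>A. le x w \<and> le w y}"
  let ?J = "{w\<in>A. le x w \<and> le w y \<and> w \<noteq> y}"
  have IJ: "?I = insert y ?J" using xy refl by auto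
  have fJ: "finite ?J" using fin by auto
  have eq: "mu0 x w = mu_f (card A) A le x w" if "w \<in> ?J" for w
    using mu_f_stable[of x w, rule_format, of "Suc (card A)" "card A"] hh_bound[of w] that
    unfolding mu0_def by auto
  have "(\<Sum>w\<in>?I. mu0 x w) = mu0 x y + (\<Sum>w\<in>?J. mu0 x w)"
    unfolding IJ by (rule sum.insert) (use fJ in auto)
  also have "(\<Sum>w\<in>?J. mu0 x w) = (\<Sum>w\<in>?J. mu_f (card A) A le x w)"
    by (rule sum.cong) (auto simp: eq)
  also have "mu0 x y = - (\<Sum>w\<in>?J. mu_f (card A) A le x w)"
    using xy by (simp add: mu0_def)
  finally show "(\<Sum>w\<in>?I. mu0 x w) = 0" by simp
next
  fix x y assume "\<not> (x \<in> A \<and> y \<in> A \<and> le x y)"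
  thus "mu0 x y = 0" by (auto simp: mu0_def)
qed

lemma mobius_unique:
  assumes f: "is_mobius A le f" and g: "is_mobius A le g"
  shows "f = g"
proof (intro ext)
  fix x y
  show "f x y = g x y"
  proof (cases "x \<in> A \<and> y \<in> A \<and> le x y")
    case False thus ?thesis using f g by (simp add: is_mobius_def)
  next
    case True
    then show ?thesis
    proof (induction "hh x y" arbitrary: y rule: less_induct)
      case less
      show ?case
      proof (cases "x = y")
        case True thus ?thesis using f g less.prems by (simp add: is_mobius_def)
      next
        case False
        let ?I = "{w\<in>A. le x w \<and> le w y}"
        let ?J = "{w\<in>A. le x w \<and> le w y \<and> w \<noteq> y}"
        have IJ: "?I = insert y ?J" using less.prems refl by auto
        have fJ: "finite ?J" using fin by auto
        have "(\<Sum>w\<in>?I. f x w) = 0" "(\<Sum>w\<in>?I. g x w) = 0"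
          using f g less.prems False by (auto simp: is_mobius_def)
        hence "f x y + (\<Sum>w\<in>?J. f x w) = 0" "g x y + (\<Sum>w\<in>?J. g x w) = 0"
          unfolding IJ using fJ by (auto simp: sum.insert)
        moreover have "(\<Sum>w\<in>?J. f x w) = (\<Sum>w\<in>?J. g x w)"
        proof (rule sum.cong)
          fix w assume w: "w \<in> ?J"
          hence "hh x w < hh x y" using hh_less less.prems by auto
          thus "f x w = g x w" using less.hyps w less.prems by auto
        qed auto
        ultimately show ?thesis by linarith
      qed
    qed
  qed
qed

lemma mobius_is: "is_mobius A le (mobius A le)"
  unfolding mobius_def
  by (rule theI[of _ mu0]) (use mu0_is_mobius mobius_unique in auto)

lemma mobius_sum:
  assumes "x \<in> A" "y \<in> A" "le x y"
  shows "(\<Sum>w\<in>{w\<in>A. le x w \<and> le w y}. mobius A le x w) = (if x = y then 1 else 0)"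
proof (cases "x = y")
  case True
  have "{w\<in>A. le x w \<and> le w y} = {x}" using True assms antisym refl by auto
  thus ?thesis using mobius_is True assms by (simp add: is_mobius_def)
next
  case False thus ?thesis using mobius_is assms by (simp add: is_mobius_def)
qed

lemma mobius_out: "\<not> (x \<in> A \<and> y \<in> A \<and> le x y) \<Longrightarrow> mobius A le x y = 0"
  using mobius_is by (simp add: is_mobius_def)

end

lemma part_card_le:
  assumes "finite X" "partition_on X P"
  shows "card P \<le> card X"
proof -
  have fin: "finite B" if "B \<in> P" for B
  proof -
    have "B \<subseteq> X" using partition_onD1[OF assms(2)] that by blast
    thus ?thesis using finite_subset assms(1) by blast
  qed
  have ne: "card B \<ge> 1" if "B \<in> P" for B
  proof -
    have "B \<noteq> {}" using partition_onD3[OF assms(2)] that by blast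
    thus ?thesis using fin[OF that] by (simp add: Suc_le_eq card_gt_0_iff)
  qed
  have "card X = (\<Sum>B\<in>P. card B)" using product_partition[OF assms(2)] fin by auto
  also have "\<dots> \<ge> (\<Sum>B\<in>P. 1)" by (rule sum_mono) (use ne in auto)
  finally show ?thesis by simp
qed

lemma part_card_eq:
  assumes "finite X" "partition_on X P" "card P = card X"
  shows "P = (\<lambda>x. {x}) ` X"
proof -
  have fin: "finite B" if "B \<in> P" for B
  proof -
    have "B \<subseteq> X" using partition_onD1[OF assms(2)] that by blast
    thus ?thesis using finite_subset assms(1) by blast
  qed
  have finP: "finite P" using finite_elements assms by auto
  have ne: "card B \<ge> 1" if "B \<in> P" for B
  proof -
    have "B \<noteq> {}" using partition_onD3[OF assms(2)] that by blast
    thus ?thesis using fin[OF that] by (simp add: Suc_le_eq card_gt_0_iff)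
  qed
  have "card X = (\<Sum>B\<in>P. card B)" using product_partition[OF assms(2)] fin by auto
  hence "(\<Sum>B\<in>P. card B) = (\<Sum>B\<in>P. 1)" using assms(3) by simp
  have "\<forall>B\<in>P. card B = 1"
  proof
    fix B assume "B \<in> P"
    from sum_mono_inv[of "\<lambda>B. 1" P card, OF _ ne this finP] show "card B = 1"
      using \<open>(\<Sum>B\<in>P. card B) = (\<Sum>B\<in>P. 1)\<close> by simp
  qed
  hence one: "\<And>B. B \<in> P \<Longrightarrow> \<exists>b. B = {b}" by (simp add: card_1_singleton_iff)
  have U: "\<Union>P = X" using assms(2) partition_onD1 by auto
  show ?thesis
  proof
    show "P \<subseteq> (\<lambda>x. {x}) ` X" using one U by blast
    show "(\<lambda>x. {x}) ` X \<subseteq> P"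
    proof
      fix B assume "B \<in> (\<lambda>x. {x}) ` X"
      then obtain x where x: "x \<in> X" "B = {x}" by auto
      then obtain C where "C \<in> P" "x \<in> C" using U by auto
      with one[of C] x show "B \<in> P" by auto
    qed
  qed
qed

lemma stirS_above: "stirS S p q = 0" if "q > p"
proof -
  have e: "{P. partition_on {1..p} P \<and> card P = q \<and> (\<forall>B\<in>P. card B \<in> S)} = {}"
    using part_card_le[of "{1..p}"] that by fastforce
  show ?thesis unfolding stirS_def e by simp
qed
  
lemma stirS_diag:
  assumes "1 \<in> S"
  shows "stirS S p p = 1"
proof -
  have e: "{P. partition_on {1..p} P \<and> card P = p \<and> (\<forall>B\<in>P. card B \<in> S)} = {(\<lambda>x. {x}) ` {1..p}}"
  proof (intro equalityI subsetI)
    fix P assume "P \<in> {P. partition_on {1..p} P \<and> card P = p \<and> (\<forall>B\<in>P. card B \<in> S)}"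
    thus "P \<in> {(\<lambda>x. {x}) ` {1..p}}" using part_card_eq[of "{1..p}" P] by auto
  next
    fix P assume "P \<in> {(\<lambda>x. {x}) ` {1..p}}"
    hence P: "P = (\<lambda>x. {x}) ` {1..p}" by simp
    have "card P = p" unfolding P by (subst card_image) (auto simp: inj_on_def)
    thus "P \<in> {P. partition_on {1..p} P \<and> card P = p \<and> (\<forall>B\<in>P. card B \<in> S)}"
      using P partition_on_singletons[of "{1..p}"] assms by auto
  qed
  show ?thesis unfolding stirS_def e by simp
qed

lemma part_img:
  assumes h: "bij_betw h A B" and P: "partition_on A P"
  shows "partition_on B ((`) h ` P) \<and> card ((`) h ` P) = card P \<and>
         (\<forall>C\<in>P. card (h ` C) = card C)"
proof -
  have inj: "inj_on h A" and hA: "h ` A = B" using h by (auto simp: bij_betw_def)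
  have sub: "\<And>C. C \<in> P \<Longrightarrow> C \<subseteq> A" using partition_onD1[OF P] by blast
  have "partition_on (h ` A) ((`) h ` P - {{}})" by (rule partition_on_inj_image[OF P inj])
  moreover have "(`) h ` P - {{}} = (`) h ` P" using partition_onD3[OF P] by auto
  ultimately have 1: "partition_on B ((`) h ` P)" using hA by simp
  have "inj_on ((`) h) P"
  proof (rule inj_onI)
    fix C D assume "C \<in> P" "D \<in> P" "h ` C = h ` D"
    thus "C = D" using inj_on_image_eq_iff[OF inj] sub by blast
  qed
  hence 2: "card ((`) h ` P) = card P" by (rule card_image)
  have 3: "\<forall>C\<in>P. card (h ` C) = card C"
    using sub inj by (meson card_image inj_on_subset)
  show ?thesis using 1 2 3 by blast
qed

lemma part_count_bij:
  assumes h: "bij_betw h A B"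
  shows "card {P. partition_on A P \<and> card P = j \<and> (\<forall>C\<in>P. card C \<in> S)} =
         card {P. partition_on B P \<and> card P = j \<and> (\<forall>C\<in>P. card C \<in> S)}"
proof (rule bij_betw_same_card)
  define g where "g = inv_into A h"
  have g: "bij_betw g B A" unfolding g_def by (rule bij_betw_inv_into[OF h])
  have gh: "\<And>x. x \<in> A \<Longrightarrow> g (h x) = x" unfolding g_def using h
    by (simp add: bij_betw_def inv_into_f_f)
  have hg: "\<And>x. x \<in> B \<Longrightarrow> h (g x) = x" unfolding g_def using h
    by (simp add: bij_betw_def f_inv_into_f)
  show "bij_betw ((`) ((`) h)) {P. partition_on A P \<and> card P = j \<and> (\<forall>C\<in>P. card C \<in> S)}
         {P. partition_on B P \<and> card P = j \<and> (\<forall>C\<in>P. card C \<in> S)}"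
  proof (rule bij_betw_byWitness[where f' = "(`) ((`) g)"])
    show "\<forall>P\<in>{P. partition_on A P \<and> card P = j \<and> (\<forall>C\<in>P. card C \<in> S)}. (`) g ` (`) h ` P = P"
    proof
      fix P assume "P \<in> {P. partition_on A P \<and> card P = j \<and> (\<forall>C\<in>P. card C \<in> S)}"
      hence sub: "\<And>C. C \<in> P \<Longrightarrow> C \<subseteq> A" using partition_onD1 by blast
      have "\<And>C. C \<in> P \<Longrightarrow> g ` h ` C = C"
        using sub gh by (simp add: image_image) (metis (no_types, lifting) image_cong image_ident subsetD)
      thus "(`) g ` (`) h ` P = P" by (simp add: image_image)
    qed
    show "\<forall>P\<in>{P. partition_on B P \<and> card P = j \<and> (\<forall>C\<in>P. card C \<in> S)}. (`) h ` (`) g ` P = P"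
    proof
      fix P assume "P \<in> {P. partition_on B P \<and> card P = j \<and> (\<forall>C\<in>P. card C \<in> S)}"
      hence sub: "\<And>C. C \<in> P \<Longrightarrow> C \<subseteq> B" using partition_onD1 by blast
      have "\<And>C. C \<in> P \<Longrightarrow> h ` g ` C = C"
        using sub hg by (simp add: image_image) (metis (no_types, lifting) image_cong image_ident subsetD)
      thus "(`) h ` (`) g ` P = P" by (simp add: image_image)
    qed
    show "(`) ((`) h) ` {P. partition_on A P \<and> card P = j \<and> (\<forall>C\<in>P. card C \<in> S)}
        \<subseteq> {P. partition_on B P \<and> card P = j \<and> (\<forall>C\<in>P. card C \<in> S)}"
      using part_img[OF h] by fastforce
    show "(`) ((`) g) ` {P. partition_on B P \<and> card P = j \<and> (\<forall>C\<in>P. card C \<in> S)}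
        \<subseteq> {P. partition_on A P \<and> card P = j \<and> (\<forall>C\<in>P. card C \<in> S)}"
      using part_img[OF g] by fastforce
  qed
qed

lemma part_count_stirS:
  assumes "finite X"
  shows "card {P. partition_on X P \<and> card P = j \<and> (\<forall>C\<in>P. card C \<in> S)} = stirS S (card X) j"
proof -
  obtain h where "bij_betw h {1..card X} X" using ex_bij_betw_nat_finite_1[OF assms] by blast
  from part_count_bij[OF this] show ?thesis unfolding stirS_def by simp
qed

function T0 :: "nat set \<Rightarrow> nat \<Rightarrow> nat \<Rightarrow> int" where
  "T0 S i j = (if j < 1 \<or> i < j then 0 else if i = j then 1 else
       - (\<Sum>l\<in>{j..<i}. int (stirS S i l) * T0 S l j))"
  by pat_completeness auto
termination by (relation "measure (\<lambda>(S,i,j). i)") auto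

declare T0.simps[simp del]

lemma T0_zero: "j < 1 \<or> i < 1 \<or> i < j \<Longrightarrow> T0 S i j = 0"
  by (subst T0.simps) auto

lemma T0_inv:
  assumes "1 \<in> S"
  shows "is_stir_inv S (T0 S)"
  unfolding is_stir_inv_def
proof (intro conjI allI impI)
  fix i j :: nat assume "j < 1 \<or> i < 1 \<or> i < j" thus "T0 S i j = 0" by (rule T0_zero)
next
  fix i j :: nat assume ij: "1 \<le> i" "1 \<le> j"
  show "(\<Sum>l\<in>{1..i}. int (stirS S i l) * T0 S l j) = (if i = j then 1 else 0)"
  proof (cases "i < j")
    case True
    thus ?thesis by (auto intro!: sum.neutral simp: T0_zero)
  next
    case False
    have "(\<Sum>l\<in>{1..i}. int (stirS S i l) * T0 S l j) = (\<Sum>l\<in>{j..i}. int (stirS S i l) * T0 S l j)"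
      by (rule sum.mono_neutral_right) (use ij False in \<open>auto simp: T0_zero\<close>)
    also have "{j..i} = insert i {j..<i}" using False by auto
    also have "(\<Sum>l\<in>insert i {j..<i}. int (stirS S i l) * T0 S l j)
        = T0 S i j + (\<Sum>l\<in>{j..<i}. int (stirS S i l) * T0 S l j)"
      by (simp add: stirS_diag[OF assms])
    also have "\<dots> = (if i = j then 1 else 0)"
    proof (cases "i = j")
      case True thus ?thesis using ij by (subst T0.simps) simp
    next
      case False2: False
      thus ?thesis using ij False by (subst T0.simps) simp
    qed
    finally show ?thesis .
  qed
qed

lemma stir_inv_unique:
  assumes "1 \<in> S" "is_stir_inv S T"
  shows "T = T0 S"
proof (intro ext)
  fix i j
  show "T i j = T0 S i j"
  proof (induction i rule: less_induct)
    case (less i)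
    show ?case
    proof (cases "j < 1 \<or> i < 1 \<or> i < j")
      case True
      have "T i j = 0" using assms(2) True unfolding is_stir_inv_def by blast
      thus ?thesis using T0_zero True by simp
    next
      case False
      have eq: "(\<Sum>l\<in>{1..i}. int (stirS S i l) * U l j) = U i j + (\<Sum>l\<in>{1..<i}. int (stirS S i l) * U l j)"
        for U :: "nat \<Rightarrow> nat \<Rightarrow> int"
      proof -
        have "{1..i} = insert i {1..<i}" using False by auto
        thus ?thesis by (simp add: stirS_diag[OF assms(1)])
      qed
      have a: "(\<Sum>l\<in>{1..i}. int (stirS S i l) * T l j) = (if i = j then 1 else 0)"
        using assms(2) False unfolding is_stir_inv_def by simp
      have b: "(\<Sum>l\<in>{1..i}. int (stirS S i l) * T0 S l j) = (if i = j then 1 else 0)"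
        using T0_inv[OF assms(1)] False unfolding is_stir_inv_def by simp
      have c: "(\<Sum>l\<in>{1..<i}. int (stirS S i l) * T l j) = (\<Sum>l\<in>{1..<i}. int (stirS S i l) * T0 S l j)"
        by (rule sum.cong) (auto simp: less)
      show ?thesis using a b c eq[of T] eq[of "T0 S"] by linarith
    qed
  qed
qed

lemma stir_inv_T0:
  assumes "1 \<in> S" "m > 0"
  shows "stir_inv S n m = T0 S n (nat m)"
proof -
  have "(THE T. is_stir_inv S T) = T0 S"
    by (rule the_equality[of "is_stir_inv S" "T0 S", OF T0_inv[OF assms(1)]]) (rule stir_inv_unique[OF assms(1)])
  thus ?thesis unfolding stir_inv_def using assms by simp
qed

lemma left_inv_T0:
  fixes L :: "nat \<Rightarrow> nat \<Rightarrow> int"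
  assumes S1: "1 \<in> S"
    and L0: "\<And>i l. i < l \<Longrightarrow> L i l = 0"
    and Linv: "\<And>i j. 1 \<le> i \<Longrightarrow> 1 \<le> j \<Longrightarrow> (\<Sum>l\<in>{1..i}. L i l * int (stirS S l j)) = (if i = j then 1 else 0)"
    and i: "1 \<le> i" and m: "1 \<le> m"
  shows "L i m = T0 S i m"
proof (cases "i < m")
  case True thus ?thesis using L0 T0_zero by auto
next
  case False
  have Tinv: "(\<Sum>q\<in>{1..p}. int (stirS S p q) * T0 S q m) = (if p = m then 1 else 0)" if "1 \<le> p" for p
    using T0_inv[OF S1] that m unfolding is_stir_inv_def by simp
  have "L i m = (\<Sum>p\<in>{1..i}. L i p * (if p = m then 1 else 0))"
    using False m by (simp add: sum.delta' if_distrib[of "\<lambda>x. L i _ * x"] cong: if_cong)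
  also have "\<dots> = (\<Sum>p\<in>{1..i}. L i p * (\<Sum>q\<in>{1..i}. int (stirS S p q) * T0 S q m))"
  proof (rule sum.cong)
    fix p assume p: "p \<in> {1..i}"
    have "(\<Sum>q\<in>{1..i}. int (stirS S p q) * T0 S q m) = (\<Sum>q\<in>{1..p}. int (stirS S p q) * T0 S q m)"
      by (rule sum.mono_neutral_right) (use p in \<open>auto simp: stirS_above\<close>)
    thus "L i p * (if p = m then 1 else 0) = L i p * (\<Sum>q\<in>{1..i}. int (stirS S p q) * T0 S q m)"
      using Tinv[of p] p by simp
  qed simp
  also have "\<dots> = (\<Sum>p\<in>{1..i}. \<Sum>q\<in>{1..i}. L i p * int (stirS S p q) * T0 S q m)"
    by (simp add: sum_distrib_left mult.assoc)
  also have "\<dots> = (\<Sum>q\<in>{1..i}. \<Sum>p\<in>{1..i}. L i p * int (stirS S p q) * T0 S q m)"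
    by (rule sum.swap)
  also have "\<dots> = (\<Sum>q\<in>{1..i}. (if i = q then 1 else 0) * T0 S q m)"
  proof (rule sum.cong)
    fix q assume q: "q \<in> {1..i}"
    have "(\<Sum>p\<in>{1..i}. L i p * int (stirS S p q) * T0 S q m) = (\<Sum>p\<in>{1..i}. L i p * int (stirS S p q)) * T0 S q m"
      by (simp add: sum_distrib_right)
    thus "(\<Sum>p\<in>{1..i}. L i p * int (stirS S p q) * T0 S q m) = (if i = q then 1 else 0) * T0 S q m"
      using Linv[of i q] i q by simp
  qed simp
  also have "\<dots> = (\<Sum>q\<in>{1..i}. if q = i then T0 S q m else 0)" by (rule sum.cong) auto
  also have "\<dots> = T0 S i m" using i by simp
  finally show ?thesis .
qed

lemma memS: "(c::nat) \<ge> 1 \<Longrightarrow> (c \<in> {j * (d::nat) + 1 | j. True}) \<longleftrightarrow> c mod d = 1 mod d"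
proof
  assume "c \<in> {j * d + 1 | j. True}"
  then obtain j where "c = j * d + 1" by auto
  thus "c mod d = 1 mod d" using mod_mult_self3[of j d 1] by simp
next
  assume c: "c \<ge> 1" "c mod d = 1 mod d"
  hence "d dvd c - 1" using mod_eq_dvd_iff_nat by blast
  then obtain j where "c - 1 = d * j" by (auto simp: dvd_def)
  hence "c = j * d + 1" using c by (simp add: mult.commute)
  thus "c \<in> {j * d + 1 | j. True}" by auto
qed

lemma part_fin_block: "finite X \<Longrightarrow> partition_on X P \<Longrightarrow> B \<in> P \<Longrightarrow> finite B"
proof -
  assume a: "finite X" "partition_on X P" "B \<in> P"
  have "B \<subseteq> X" using partition_onD1[OF a(2)] a(3) by blast
  thus "finite B" using finite_subset a(1) by blast
qed

lemma part_ne_block: "partition_on X P \<Longrightarrow> B \<in> P \<Longrightarrow> B \<noteq> {}"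
  using partition_onD3 by blast

lemma part_mod:
  assumes "finite X" "partition_on X P" "\<forall>B\<in>P. card B mod d = 1 mod d"
  shows "card X mod d = card P mod d"
proof -
  have "card X = (\<Sum>B\<in>P. card B)" using product_partition[OF assms(2)] part_fin_block[OF assms(1,2)] by auto
  hence "card X mod d = (\<Sum>B\<in>P. card B mod d) mod d" by (simp add: mod_sum_eq)
  also have "\<dots> = (\<Sum>B\<in>P. 1 mod d) mod d" using assms(3) by simp
  also have "\<dots> = card P mod d" by (simp add: mod_sum_eq)
  finally show ?thesis .
qed

lemma part_disj: "partition_on X P \<Longrightarrow> B \<in> P \<Longrightarrow> C \<in> P \<Longrightarrow> B \<noteq> C \<Longrightarrow> B \<inter> C = {}"
  unfolding partition_on_def disjoint_def by blast

lemma part_eq_of_inter: "partition_on X P \<Longrightarrow> B \<in> P \<Longrightarrow> C \<in> P \<Longrightarrow> x \<in> B \<Longrightarrow> x \<in> C \<Longrightarrow> B = C"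
  using part_disj by blast

lemma part_cover: "partition_on X P \<Longrightarrow> x \<in> X \<Longrightarrow> \<exists>B\<in>P. x \<in> B"
  using partition_onD1 by blast

lemma ref_lib: "partition_on X P \<Longrightarrow> partition_on X Q \<Longrightarrow> Defs.refines P Q \<Longrightarrow> Disjoint_Sets.refines X P Q"
  unfolding Defs.refines_def Disjoint_Sets.refines_def by blast

lemma ref_K: "partition_on X P \<Longrightarrow> partition_on X Q \<Longrightarrow> Defs.refines P Q \<Longrightarrow> C \<in> Q \<Longrightarrow>
  partition_on C {B\<in>P. B \<subseteq> C}"
  using ref_lib refines_obtains_subset by blast

lemma ref_card_sum:
  assumes X: "finite X" and P: "partition_on X P" and Q: "partition_on X Q" and R: "Defs.refines P Q"
  shows "card P = (\<Sum>C\<in>Q. card {B\<in>P. B \<subseteq> C})"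
proof -
  have finQ: "finite Q" using finite_elements X Q by blast
  have finP: "finite P" using finite_elements X P by blast
  have "P = (\<Union>C\<in>Q. {B\<in>P. B \<subseteq> C})" using R unfolding Defs.refines_def by blast
  hence "card P = card (\<Union>C\<in>Q. {B\<in>P. B \<subseteq> C})" by simp
  also have "\<dots> = (\<Sum>C\<in>Q. card {B\<in>P. B \<subseteq> C})"
  proof (rule card_UN_disjoint[OF finQ])
    show "\<forall>C\<in>Q. finite {B \<in> P. B \<subseteq> C}" using finP by auto
    show "\<forall>C\<in>Q. \<forall>C'\<in>Q. C \<noteq> C' \<longrightarrow> {B \<in> P. B \<subseteq> C} \<inter> {B \<in> P. B \<subseteq> C'} = {}"
    proof (intro ballI impI)
      fix C C' assume "C \<in> Q" "C' \<in> Q" "C \<noteq> C'"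
      hence "C \<inter> C' = {}" using part_disj[OF Q] by blast
      thus "{B \<in> P. B \<subseteq> C} \<inter> {B \<in> P. B \<subseteq> C'} = {}" using part_ne_block[OF P] by blast
    qed
  qed
  finally show ?thesis .
qed

lemma part_card_pos: "finite X \<Longrightarrow> partition_on X P \<Longrightarrow> X \<noteq> {} \<Longrightarrow> card P \<ge> 1"
proof -
  assume a: "finite X" "partition_on X P" "X \<noteq> {}"
  have "finite P" using finite_elements a by blast
  moreover have "P \<noteq> {}" using partition_onD1[OF a(2)] a(3) by auto
  ultimately show ?thesis by (simp add: Suc_le_eq card_gt_0_iff)
qed

lemma ref_card_le:
  assumes X: "finite X" and P: "partition_on X P" and Q: "partition_on X Q" and R: "Defs.refines P Q"
  shows "card Q \<le> card P"
proof -
  have "card Q = (\<Sum>C\<in>Q. 1)" by simp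
  also have "\<dots> \<le> (\<Sum>C\<in>Q. card {B\<in>P. B \<subseteq> C})"
  proof (rule sum_mono)
    fix C assume C: "C \<in> Q"
    have "finite C" using part_fin_block[OF X Q C] .
    thus "1 \<le> card {B\<in>P. B \<subseteq> C}"
      using part_card_pos[OF _ ref_K[OF P Q R C]] part_ne_block[OF Q C] by auto
  qed
  also have "\<dots> = card P" using ref_card_sum[OF assms] by simp
  finally show ?thesis .
qed

lemma ref_card_less:
  assumes X: "finite X" and P: "partition_on X P" and Q: "partition_on X Q" and R: "Defs.refines P Q"
    and ne: "P \<noteq> Q"
  shows "card Q < card P"
proof -
  obtain C where C: "C \<in> Q" "C \<notin> P"
  proof (rule ccontr)
    assume "\<not> thesis"
    hence QP: "Q \<subseteq> P" using that by blast
    have "P \<subseteq> Q"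
    proof
      fix B assume B: "B \<in> P"
      obtain x where x: "x \<in> B" using part_ne_block[OF P B] by blast
      have "x \<in> X" using partition_onD1[OF P] B x by blast
      then obtain C where "C \<in> Q" "x \<in> C" using part_cover[OF Q] by blast
      thus "B \<in> Q" using part_eq_of_inter[OF P B _ x, of C] QP by auto
    qed
    thus False using QP ne by blast
  qed
  have gt: "card {B\<in>P. B \<subseteq> C} \<ge> 2"
  proof -
    have KC: "partition_on C {B\<in>P. B \<subseteq> C}" using ref_K[OF P Q R C(1)] .
    have fC: "finite C" using part_fin_block[OF X Q C(1)] .
    have "card {B\<in>P. B \<subseteq> C} \<ge> 1" using part_card_pos[OF fC KC] part_ne_block[OF Q C(1)] by auto
    moreover have "card {B\<in>P. B \<subseteq> C} \<noteq> 1"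
    proof
      assume "card {B\<in>P. B \<subseteq> C} = 1"
      then obtain B where "{B\<in>P. B \<subseteq> C} = {B}" by (meson card_1_singletonE)
      hence "C = B" "B \<in> P" using partition_onD1[OF KC] by auto
      thus False using C by simp
    qed
    ultimately show ?thesis by linarith
  qed
  have "card Q = (\<Sum>C\<in>Q. 1)" by simp
  also have "\<dots> < (\<Sum>C\<in>Q. card {B\<in>P. B \<subseteq> C})"
  proof (rule sum_strict_mono_ex1)
    show "finite Q" using finite_elements X Q by blast
    show "\<forall>C\<in>Q. 1 \<le> card {B\<in>P. B \<subseteq> C}"
    proof
      fix C assume C: "C \<in> Q"
      have "finite C" using part_fin_block[OF X Q C] .
      thus "1 \<le> card {B\<in>P. B \<subseteq> C}"
        using part_card_pos[OF _ ref_K[OF P Q R C]] part_ne_block[OF Q C] by auto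
    qed
    show "\<exists>C\<in>Q. 1 < card {B\<in>P. B \<subseteq> C}" using gt C by (intro bexI[of _ C]) auto
  qed
  also have "\<dots> = card P" using ref_card_sum[OF assms(1-4)] by simp
  finally show ?thesis .
qed

definition goodp :: "nat \<Rightarrow> nat set \<Rightarrow> nat set set \<Rightarrow> bool" where
  "goodp d X P \<longleftrightarrow> partition_on X P \<and> (\<forall>B\<in>P. card B mod d = 1 mod d)"

lemma between:
  assumes X: "finite X" and d: "d \<ge> 1" and P: "goodp d X P" and Q: "goodp d X Q"
    and R: "Defs.refines P Q" and ne: "P \<noteq> Q"
  shows "\<exists>W. goodp d X W \<and> Defs.refines P W \<and> Defs.refines W Q \<and> card W = card Q + d"
proof -
  have Pp: "partition_on X P" and Qp: "partition_on X Q" using P Q by (auto simp: goodp_def)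
  obtain C where C: "C \<in> Q" "C \<notin> P"
  proof (rule ccontr)
    assume "\<not> thesis"
    hence QP: "Q \<subseteq> P" using that by blast
    have "P \<subseteq> Q"
    proof
      fix B assume B: "B \<in> P"
      obtain x where x: "x \<in> B" using part_ne_block[OF Pp B] by blast
      have "x \<in> X" using partition_onD1[OF Pp] B x by blast
      then obtain C where "C \<in> Q" "x \<in> C" using part_cover[OF Qp] by blast
      thus "B \<in> Q" using part_eq_of_inter[OF Pp B _ x, of C] QP by auto
    qed
    thus False using QP ne by blast
  qed
  define K where "K = {B\<in>P. B \<subseteq> C}"
  have KC: "partition_on C K" unfolding K_def using ref_K[OF Pp Qp R C(1)] .
  have fC: "finite C" using part_fin_block[OF X Qp C(1)] .
  have finK: "finite K" using finite_elements[OF fC KC] .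
  have K2: "card K \<ge> 2"
  proof -
    have "card K \<ge> 1" using part_card_pos[OF fC KC] part_ne_block[OF Qp C(1)] by auto
    moreover have "card K \<noteq> 1"
    proof
      assume "card K = 1"
      then obtain B where "K = {B}" by (meson card_1_singletonE)
      hence "C = B" "B \<in> P" using partition_onD1[OF KC] unfolding K_def by auto
      thus False using C by simp
    qed
    ultimately show ?thesis by linarith
  qed
  have Kmod: "card K mod d = 1 mod d"
  proof -
    have "card C mod d = card K mod d"
      by (rule part_mod[OF fC KC]) (use P in \<open>auto simp: goodp_def K_def\<close>)
    moreover have "card C mod d = 1 mod d" using Q C by (auto simp: goodp_def)
    ultimately show ?thesis by simp
  qed
  have Kd: "card K \<ge> d + 1"
  proof -
    have "d dvd card K - 1" using Kmod K2 mod_eq_dvd_iff_nat[of 1 "card K" d] by auto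
    then obtain q where q: "card K - 1 = d * q" by (auto simp: dvd_def)
    have "q \<ge> 1" using q K2 by (cases q) auto
    hence "d * q \<ge> d" by simp
    thus ?thesis using q K2 by linarith
  qed
  obtain D where D: "D \<subseteq> K" "card D = d" "finite D"
    using obtain_subset_with_card_n[of d K] Kd by auto
  define E where "E = C - \<Union>D"
  have UK: "\<Union>K = C" using partition_onD1[OF KC] by simp
  have KsubP: "K \<subseteq> P" unfolding K_def by auto
  have disjK: "\<And>B B'. B \<in> K \<Longrightarrow> B' \<in> K \<Longrightarrow> B \<noteq> B' \<Longrightarrow> B \<inter> B' = {}"
    using part_disj[OF Pp] KsubP by blast
  have neK: "\<And>B. B \<in> K \<Longrightarrow> B \<noteq> {}" using part_ne_block[OF Pp] KsubP by blast
  have EU: "E = \<Union>(K - D)"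
  proof
    show "E \<subseteq> \<Union>(K - D)" unfolding E_def using UK by blast
    show "\<Union>(K - D) \<subseteq> E"
    proof
      fix x assume "x \<in> \<Union>(K - D)"
      then obtain B where B: "B \<in> K" "B \<notin> D" "x \<in> B" by blast
      have "x \<notin> \<Union>D" using disjK[OF B(1)] B D(1) by blast
      thus "x \<in> E" unfolding E_def using B UK by blast
    qed
  qed
  have cKD: "card (K - D) = card K - d" using D finK by (simp add: card_Diff_subset)
  have KDne: "K - D \<noteq> {}"
  proof
    assume e: "K - D = {}"
    have "card (K - D) = 0" unfolding e by simp
    thus False using cKD Kd by linarith
  qed
  have Ene: "E \<noteq> {}" using EU KDne neK by blast
  have ESub: "E \<subseteq> C" unfolding E_def by blast
  have KDpart: "partition_on E (K - D)"
    unfolding EU using KC unfolding partition_on_def disjoint_def by blast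
  have Emod: "card E mod d = 1 mod d"
  proof -
    have fE: "finite E" using ESub fC finite_subset by blast
    have "card E mod d = card (K - D) mod d"
      by (rule part_mod[OF fE KDpart]) (use P KsubP in \<open>auto simp: goodp_def\<close>)
    also have "\<dots> = (card K - d) mod d" using cKD by simp
    also have "\<dots> = card K mod d" using Kd by (simp add: mod_if le_mod_geq)
    finally show ?thesis using Kmod by simp
  qed
  have Dne: "D \<noteq> {}" using D d by auto
  have UDsub: "\<Union>D \<subseteq> C" using D UK by blast
  have EnotC: "E \<noteq> C"
  proof
    assume "E = C"
    obtain B where "B \<in> D" using Dne by blast
    hence "B \<subseteq> C" "B \<noteq> {}" using D neK UK by blast+
    thus False using \<open>E = C\<close> \<open>B \<in> D\<close> unfolding E_def by blast
  qed
  define W where "W = (Q - {C}) \<union> D \<union> {E}"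
  have UQ: "\<Union>Q = X" using partition_onD1[OF Qp] by simp
  have disjQ: "\<And>C'. C' \<in> Q \<Longrightarrow> C' \<noteq> C \<Longrightarrow> C' \<inter> C = {}" using part_disj[OF Qp C(1)] by blast
  have Wpart: "partition_on X W"
  proof (rule partition_onI)
    show "\<Union>W = X"
    proof
      show "\<Union>W \<subseteq> X" unfolding W_def using UQ C(1) UDsub ESub by blast
      show "X \<subseteq> \<Union>W"
      proof
        fix x assume "x \<in> X"
        then obtain C' where C': "C' \<in> Q" "x \<in> C'" using UQ by blast
        show "x \<in> \<Union>W"
        proof (cases "C' = C")
          case False thus ?thesis using C' unfolding W_def by blast
        next
          case True
          thus ?thesis using C' unfolding W_def E_def by blast
        qed
      qed
    qed
    show "{} \<notin> W" unfolding W_def using part_ne_block[OF Qp] D(1) neK Ene by blast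
    fix p q assume pq: "p \<in> W" "q \<in> W" "p \<noteq> q"
    have DC: "\<And>B. B \<in> D \<Longrightarrow> B \<subseteq> C" using D(1) UK by blast
    have QQ: "a \<inter> b = {}" if "a \<in> Q - {C}" "b \<in> Q - {C}" "a \<noteq> b" for a b
      using part_disj[OF Qp] that by blast
    have QD: "a \<inter> b = {}" if "a \<in> Q - {C}" "b \<in> D" for a b
    proof -
      have "a \<inter> C = {}" using disjQ that(1) by blast
      thus ?thesis using DC[OF that(2)] by blast
    qed
    have QE: "a \<inter> E = {}" if "a \<in> Q - {C}" for a
    proof -
      have "a \<inter> C = {}" using disjQ that(1) by blast
      thus ?thesis using ESub by blast
    qed
    have DD: "a \<inter> b = {}" if "a \<in> D" "b \<in> D" "a \<noteq> b" for a b
      using disjK that D(1) by blast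
    have DE: "a \<inter> E = {}" if "a \<in> D" for a
      using that unfolding E_def by blast
    have pc: "p \<in> Q - {C} \<or> p \<in> D \<or> p = E" "q \<in> Q - {C} \<or> q \<in> D \<or> q = E"
      using pq unfolding W_def by blast+
    have "p \<inter> q = {}"
      using pc pq(3) QQ QD QE DD DE by (metis inf_commute)
    thus "disjnt p q" by (simp add: disjnt_def)
  qed
  have Wgood: "goodp d X W"
    unfolding goodp_def using Wpart Q P D(1) KsubP Emod unfolding W_def goodp_def by blast
  have R1: "Defs.refines P W"
    unfolding Defs.refines_def
  proof
    fix B assume B: "B \<in> P"
    then obtain C' where C': "C' \<in> Q" "B \<subseteq> C'" using R unfolding Defs.refines_def by blast
    show "\<exists>C\<in>W. B \<subseteq> C"
    proof (cases "C' = C")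
      case False thus ?thesis using C' unfolding W_def by blast
    next
      case True
      hence BK: "B \<in> K" using B C' unfolding K_def by blast
      show ?thesis
      proof (cases "B \<in> D")
        case True thus ?thesis unfolding W_def by blast
      next
        case False
        hence "B \<subseteq> E" unfolding EU using BK by blast
        thus ?thesis unfolding W_def by blast
      qed
    qed
  qed
  have R2: "Defs.refines W Q"
    unfolding Defs.refines_def W_def using C(1) D(1) UK ESub by blast
  have cW: "card W = card Q + d"
  proof -
    have finQ: "finite Q" using finite_elements[OF X Qp] .
    have d1: "(Q - {C}) \<inter> D = {}"
    proof (rule ccontr)
      assume "(Q - {C}) \<inter> D \<noteq> {}"
      then obtain B where B: "B \<in> Q" "B \<noteq> C" "B \<in> D" by blast
      hence "B \<subseteq> C" "B \<noteq> {}" using D(1) UK neK by blast+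
      thus False using disjQ[OF B(1,2)] by blast
    qed
    have d2: "E \<notin> (Q - {C}) \<union> D"
    proof
      assume "E \<in> (Q - {C}) \<union> D"
      thus False
      proof
        assume "E \<in> Q - {C}" thus False using disjQ ESub Ene by blast
      next
        assume "E \<in> D"
        thus False using Ene unfolding E_def by blast
      qed
    qed
    have "card W = card ((Q - {C}) \<union> D) + 1" unfolding W_def
      using d2 finQ D(3) by simp
    also have "card ((Q - {C}) \<union> D) = card (Q - {C}) + card D"
      by (rule card_Un_disjoint) (use finQ D(3) d1 in auto)
    also have "card (Q - {C}) = card Q - 1" using C(1) finQ by simp
    finally have "card W = card Q - 1 + card D + 1" .
    moreover have "card Q > 0" using finQ C(1) card_gt_0_iff by blast
    ultimately show ?thesis using D(2) by linarith
  qed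
  show ?thesis using Wgood R1 R2 cW by blast
qed

lemma Pi1d_goodp: "Pi1d n d = {P. goodp d {1..n} P}"
  unfolding Pi1d_def goodp_def by simp

lemma sing_in: "singletons n \<in> Pi1d n d"
  unfolding Pi1d_def singletons_def using partition_on_singletons[of "{1..n}"] by auto

lemma sing_card: "card (singletons n) = n"
  unfolding singletons_def by (subst card_image) (auto simp: inj_on_def)

lemma sing_ref: "P \<in> Pi1d n d \<Longrightarrow> Defs.refines (singletons n) P"
  unfolding Defs.refines_def singletons_def Pi1d_def using part_cover by fastforce

lemma Pi_part: "P \<in> Pi1d n d \<Longrightarrow> partition_on {1..n} P"
  unfolding Pi1d_def by simp

lemma Pi_card_le: "P \<in> Pi1d n d \<Longrightarrow> card P \<le> n"
  using part_card_le[of "{1..n}" P] Pi_part by auto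

lemma Pi_mod: "P \<in> Pi1d n d \<Longrightarrow> card P mod d = n mod d"
  using part_mod[of "{1..n}" P d] unfolding Pi1d_def by auto

lemma Pi_dvd: "P \<in> Pi1d n d \<Longrightarrow> d dvd n - card P"
  using Pi_mod Pi_card_le mod_eq_dvd_iff_nat by metis

lemma Pi_refl: "P \<in> Pi1d n d \<Longrightarrow> Defs.refines P P"
  unfolding Defs.refines_def by blast

lemma Pi_trans: "Defs.refines P Q \<Longrightarrow> Defs.refines Q R \<Longrightarrow> Defs.refines P R"
  unfolding Defs.refines_def by (meson order_trans)

lemma Pi_antisym: "P \<in> Pi1d n d \<Longrightarrow> Q \<in> Pi1d n d \<Longrightarrow> Defs.refines P Q \<Longrightarrow> Defs.refines Q P \<Longrightarrow> P = Q"
  using refines_asym[of "{1..n}" P Q] ref_lib Pi_part by blast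

lemma Pi_finite: "finite (Pi1d n d)"
proof (rule finite_subset)
  show "Pi1d n d \<subseteq> Pow (Pow {1..n})" unfolding Pi1d_def partition_on_def by auto
qed simp

lemma Pi_fposet: "fposet (Pi1d n d) Defs.refines"
  by unfold_locales (use Pi_finite Pi_refl Pi_antisym Pi_trans in blast)+

lemma dvd_gap:
  fixes a b d :: nat
  assumes "a < b" "b mod d = a mod d" "b < a + d"
  shows False
proof -
  have "d dvd b - a" using assms mod_eq_dvd_iff_nat[of a b d] by auto
  then obtain q where q: "b - a = d * q" by (auto elim: dvdE)
  have "q \<noteq> 0"
  proof
    assume "q = 0" hence "b - a = 0" using q by simp
    thus False using assms(1) by simp
  qed
  hence "d * q \<ge> d" by simp
  thus False using q assms by linarith
qed

lemma ref_less_card: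
  assumes "P \<in> Pi1d n d" "Q \<in> Pi1d n d" "Defs.refines P Q" "P \<noteq> Q"
  shows "card Q < card P"
  using ref_card_less[of "{1..n}" P Q] assms Pi_part by auto

lemma cover_card:
  assumes d: "d \<ge> 1" and c: "covers (Pi1d n d) Defs.refines x y"
  shows "card x = card y + d"
proof -
  have x: "x \<in> Pi1d n d" and y: "y \<in> Pi1d n d" and R: "Defs.refines x y" and ne: "x \<noteq> y"
    using c unfolding covers_def by auto
  obtain W where W: "goodp d {1..n} W" "Defs.refines x W" "Defs.refines W y" "card W = card y + d"
    using between[of "{1..n}" d x y] x y R ne d unfolding Pi1d_goodp by auto
  have Win: "W \<in> Pi1d n d" using W(1) unfolding Pi1d_goodp by simp
  have "W \<noteq> y" using W(4) d by auto
  hence "W = x" using c Win W(2,3) unfolding covers_def by blast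
  thus ?thesis using W(4) by simp
qed

lemma cover_exists:
  assumes d: "d \<ge> 1" and P: "P \<in> Pi1d n d" and ne: "P \<noteq> singletons n"
  shows "\<exists>w. covers (Pi1d n d) Defs.refines w P \<and> card w = card P + d"
proof -
  obtain W where W: "goodp d {1..n} W" "Defs.refines (singletons n) W" "Defs.refines W P" "card W = card P + d"
    using between[of "{1..n}" d "singletons n" P] P sing_in[of n d] sing_ref[OF P] ne d
    unfolding Pi1d_goodp by auto
  have Win: "W \<in> Pi1d n d" using W(1) unfolding Pi1d_goodp by simp
  have "covers (Pi1d n d) Defs.refines W P"
    unfolding covers_def
  proof (intro conjI)
    show "W \<noteq> P" using W(4) d by auto
    show "\<not> (\<exists>w\<in>Pi1d n d. Defs.refines W w \<and> Defs.refines w P \<and> w \<noteq> W \<and> w \<noteq> P)"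
    proof
      assume "\<exists>w\<in>Pi1d n d. Defs.refines W w \<and> Defs.refines w P \<and> w \<noteq> W \<and> w \<noteq> P"
      then obtain u where u: "u \<in> Pi1d n d" "Defs.refines W u" "Defs.refines u P" "u \<noteq> W" "u \<noteq> P"
        by blast
      have "card u < card W" using ref_less_card[OF Win u(1) u(2)] u(4) by auto
      moreover have "card P < card u" using ref_less_card[OF u(1) P u(3) u(5)] .
      moreover have "card u mod d = card P mod d" using Pi_mod[OF u(1)] Pi_mod[OF P] by simp
      ultimately show False using W(4) dvd_gap by fastforce
    qed
  qed (use Win P W in auto)
  thus ?thesis using W(4) by blast
qed

lemma rank_eq:
  assumes d: "d \<ge> 1" and r: "rank_fun (Pi1d n d) Defs.refines (singletons n) \<rho>"
  shows "P \<in> Pi1d n d \<Longrightarrow> \<rho> P = (n - card P) div d"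
proof (induction "n - card P" arbitrary: P rule: less_induct)
  case less
  show ?case
  proof (cases "P = singletons n")
    case True thus ?thesis using r sing_card unfolding rank_fun_def by simp
  next
    case False
    obtain w where w: "covers (Pi1d n d) Defs.refines w P" "card w = card P + d"
      using cover_exists[OF d less.prems False] by blast
    have win: "w \<in> Pi1d n d" using w(1) unfolding covers_def by blast
    have le: "card w \<le> n" using Pi_card_le[OF win] .
    have "\<rho> w = (n - card w) div d" using less.hyps[OF _ win] w(2) le d by auto
    moreover have "\<rho> P = \<rho> w + 1" using r w(1) unfolding rank_fun_def by blast
    moreover have "n - card P = (n - card w) + d" using w(2) le by simp
    ultimately show ?thesis using d by (simp add: div_add_self2)
  qed
qed

lemma ranked_Pi:
  assumes d: "d \<ge> 1"
  shows "rank_fun (Pi1d n d) Defs.refines (singletons n) (\<lambda>P. (n - card P) div d)"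
  unfolding rank_fun_def
proof (intro conjI allI impI)
  show "(n - card (singletons n)) div d = 0" by (simp add: sing_card)
  fix x y assume c: "covers (Pi1d n d) Defs.refines x y"
  have "card x = card y + d" using cover_card[OF d c] .
  moreover have "card x \<le> n" using c Pi_card_le unfolding covers_def by blast
  ultimately have "n - card y = (n - card x) + d" by simp
  thus "(n - card y) div d = (n - card x) div d + 1" using d by (simp add: div_add_self2)
qed

lemma sub_part: "partition_on X x \<Longrightarrow> G \<subseteq> x \<Longrightarrow> partition_on (\<Union>G) G"
  unfolding partition_on_def disjoint_def by blast

lemma coarsen_count:
  assumes d: "d \<ge> 1" and x: "x \<in> Pi1d n d"
  shows "card {Pp. partition_on x Pp \<and> card Pp = j \<and> (\<forall>G\<in>Pp. card G \<in> {j * d + 1 | j. True})}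
       = card {y\<in>Pi1d n d. Defs.refines x y \<and> card y = j}"
proof (rule bij_betw_same_card)
  define K where "K = (\<lambda>C. {B\<in>x. B \<subseteq> C})"
  have xp: "partition_on {1..n} x" using x Pi_part by blast
  have xfin: "finite x" using finite_elements[OF _ xp] by simp
  have xgood: "\<forall>B\<in>x. card B mod d = 1 mod d" using x unfolding Pi1d_def by simp
  have finB: "\<And>B. B \<in> x \<Longrightarrow> finite B" using part_fin_block[OF _ xp] by simp
  have neB: "\<And>B. B \<in> x \<Longrightarrow> B \<noteq> {}" using part_ne_block[OF xp] by blast
  let ?L = "{Pp. partition_on x Pp \<and> card Pp = j \<and> (\<forall>G\<in>Pp. card G \<in> {j * d + 1 | j. True})}"
  let ?R = "{y\<in>Pi1d n d. Defs.refines x y \<and> card y = j}"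
  have KU: "K (\<Union>G) = G" if G: "G \<subseteq> x" for G
  proof
    show "G \<subseteq> K (\<Union>G)" unfolding K_def using G by blast
    show "K (\<Union>G) \<subseteq> G"
    proof
      fix B assume "B \<in> K (\<Union>G)"
      hence B: "B \<in> x" "B \<subseteq> \<Union>G" unfolding K_def by auto
      obtain b where b: "b \<in> B" using neB[OF B(1)] by blast
      then obtain B' where "B' \<in> G" "b \<in> B'" using B(2) by blast
      thus "B \<in> G" using part_eq_of_inter[OF xp B(1) _ b, of B'] G by auto
    qed
  qed
  have UK: "\<Union>(K C) = C" if "C \<in> y" "y \<in> Pi1d n d" "Defs.refines x y" for C y
    using ref_K[OF xp Pi_part[OF that(2)] that(3) that(1)] partition_onD1 unfolding K_def by metis
  show "bij_betw ((`) Union) ?L ?R"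
  proof (rule bij_betw_byWitness[where f' = "(`) K"])
    show "\<forall>Pp\<in>?L. K ` Union ` Pp = Pp"
    proof
      fix Pp assume "Pp \<in> ?L"
      hence "\<And>G. G \<in> Pp \<Longrightarrow> G \<subseteq> x" using partition_onD1 by blast
      hence "\<And>G. G \<in> Pp \<Longrightarrow> K (\<Union>G) = G" using KU by blast
      thus "K ` Union ` Pp = Pp" by (simp add: image_image)
    qed
    show "\<forall>y\<in>?R. Union ` K ` y = y"
    proof
      fix y assume "y \<in> ?R"
      hence "\<And>C. C \<in> y \<Longrightarrow> \<Union>(K C) = C" using UK by blast
      thus "Union ` K ` y = y" by (simp add: image_image)
    qed
    show "(`) Union ` ?L \<subseteq> ?R"
    proof
      fix Y assume "Y \<in> (`) Union ` ?L"
      then obtain Pp where Y: "Y = Union ` Pp" and P: "partition_on x Pp" "card Pp = j"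
        "\<forall>G\<in>Pp. card G \<in> {j * d + 1 | j. True}" by blast
      have Gsub: "\<And>G. G \<in> Pp \<Longrightarrow> G \<subseteq> x" using partition_onD1[OF P(1)] by blast
      have Gne: "\<And>G. G \<in> Pp \<Longrightarrow> \<Union>G \<noteq> {}"
        using part_ne_block[OF P(1)] Gsub neB by blast
      have Gdisj: "\<Union>G \<inter> \<Union>G' = {}" if "G \<in> Pp" "G' \<in> Pp" "G \<noteq> G'" for G G'
      proof -
        have "G \<inter> G' = {}" using part_disj[OF P(1) that] .
        thus ?thesis using part_disj[OF xp] Gsub[OF that(1)] Gsub[OF that(2)] by blast
      qed
      have Ypart: "partition_on {1..n} Y"
      proof (rule partition_onI)
        show "\<Union>Y = {1..n}" unfolding Y using partition_onD1[OF P(1)] partition_onD1[OF xp] by auto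
        show "{} \<notin> Y" unfolding Y using Gne by auto
        fix p q assume "p \<in> Y" "q \<in> Y" "p \<noteq> q"
        thus "disjnt p q" unfolding Y disjnt_def using Gdisj by blast
      qed
      have Ygood: "\<forall>C\<in>Y. card C mod d = 1 mod d"
      proof
        fix C assume "C \<in> Y"
        then obtain G where G: "G \<in> Pp" "C = \<Union>G" unfolding Y by blast
        have fG: "finite (\<Union>G)" using Gsub[OF G(1)] finB xfin by (meson finite_Union finite_subset subsetD)
        have "card (\<Union>G) mod d = card G mod d"
          by (rule part_mod[OF fG sub_part[OF xp Gsub[OF G(1)]]]) (use xgood Gsub[OF G(1)] in blast)
        moreover have "card G mod d = 1 mod d"
        proof -
          have "card G \<in> {j * d + 1 | j. True}" using P(3) G(1) by blast
          then obtain i where "card G = i * d + 1" by blast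
          thus ?thesis using mod_mult_self3[of i d 1] by simp
        qed
        ultimately show "card C mod d = 1 mod d" using G by simp
      qed
      have Yref: "Defs.refines x Y"
        unfolding Defs.refines_def Y using partition_onD1[OF P(1)] by blast
      have "inj_on Union Pp"
      proof (rule inj_onI)
        fix G G' assume a: "G \<in> Pp" "G' \<in> Pp" "\<Union>G = \<Union>G'"
        show "G = G'"
        proof (rule ccontr)
          assume "G \<noteq> G'"
          hence "\<Union>G \<inter> \<Union>G' = {}" using Gdisj a by blast
          thus False using Gne[OF a(1)] a(3) by simp
        qed
      qed
      hence "card Y = j" unfolding Y using P(2) by (simp add: card_image)
      thus "Y \<in> ?R" using Ypart Ygood Yref unfolding Pi1d_def by blast
    qed
    show "(`) K ` ?R \<subseteq> ?L"
    proof
      fix Z assume "Z \<in> (`) K ` ?R"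
      then obtain y where Z: "Z = K ` y" and y: "y \<in> Pi1d n d" "Defs.refines x y" "card y = j" by blast
      have yp: "partition_on {1..n} y" using Pi_part[OF y(1)] .
      have KC: "\<And>C. C \<in> y \<Longrightarrow> partition_on C (K C)"
        unfolding K_def using ref_K[OF xp yp y(2)] by blast
      have Zpart: "partition_on x Z"
      proof (rule partition_onI)
        show "\<Union>Z = x"
        proof
          show "\<Union>Z \<subseteq> x" unfolding Z K_def by blast
          show "x \<subseteq> \<Union>Z"
          proof
            fix B assume B: "B \<in> x"
            then obtain C where "C \<in> y" "B \<subseteq> C" using y(2) unfolding Defs.refines_def by blast
            hence "B \<in> K C" "K C \<in> Z" using B unfolding K_def Z by auto
            thus "B \<in> \<Union>Z" by blast
          qed
        qed
        show "{} \<notin> Z"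
        proof
          assume "{} \<in> Z"
          then obtain C where C: "C \<in> y" "K C = {}" unfolding Z by auto
          have "\<Union>(K C) = C" using UK[OF C(1) y(1) y(2)] .
          thus False using C(2) part_ne_block[OF yp C(1)] by simp
        qed
        fix p q assume pq: "p \<in> Z" "q \<in> Z" "p \<noteq> q"
        then obtain C C' where C: "C \<in> y" "C' \<in> y" "p = K C" "q = K C'" unfolding Z by blast
        hence "C \<noteq> C'" using pq(3) by blast
        hence "C \<inter> C' = {}" using part_disj[OF yp C(1,2)] by blast
        thus "disjnt p q" unfolding disjnt_def C K_def using neB by blast
      qed
      have Zcard: "\<forall>G\<in>Z. card G \<in> {j * d + 1 | j. True}"
      proof
        fix G assume "G \<in> Z"
        then obtain C where C: "C \<in> y" "G = K C" unfolding Z by blast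
        have fC: "finite C" using part_fin_block[OF _ yp C(1)] by simp
        have "card C mod d = card (K C) mod d"
          by (rule part_mod[OF fC KC[OF C(1)]]) (use xgood in \<open>auto simp: K_def\<close>)
        hence "card C mod d = card G mod d" using C(2) by simp
        moreover have "card C mod d = 1 mod d" using y(1) C(1) unfolding Pi1d_def by simp
        moreover have "card G \<ge> 1"
          using part_card_pos[OF fC KC[OF C(1)]] part_ne_block[OF yp C(1)] C(2) by simp
        ultimately show "card G \<in> {j * d + 1 | j. True}" using memS by simp
      qed
      have "inj_on K y"
      proof (rule inj_onI)
        fix C C' assume "C \<in> y" "C' \<in> y" "K C = K C'"
        thus "C = C'" using UK[OF _ y(1) y(2)] by metis
      qed
      hence "card Z = j" unfolding Z using y(3) by (simp add: card_image)
      thus "Z \<in> ?L" using Zpart Zcard by blast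
    qed
  qed
qed

definition MobL :: "nat \<Rightarrow> nat \<Rightarrow> nat \<Rightarrow> int" where
  "MobL d i l = (\<Sum>x\<in>{x\<in>Pi1d i d. card x = l}. mobius (Pi1d i d) Defs.refines (singletons i) x)"

lemma MobL_zero: "i < l \<Longrightarrow> MobL d i l = 0"
proof -
  assume "i < l"
  hence e: "{x\<in>Pi1d i d. card x = l} = {}" using Pi_card_le[of _ i d] by fastforce
  show "MobL d i l = 0" unfolding MobL_def e by simp
qed

lemma MobL_inv:
  assumes d: "d \<ge> 1" and i: "1 \<le> i" and j: "1 \<le> j"
  shows "(\<Sum>l\<in>{1..i}. MobL d i l * int (stirS {j * d + 1 | j. True} l j)) = (if i = j then 1 else 0)"
proof -
  let ?A = "Pi1d i d"
  let ?z = "singletons i"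
  let ?S = "{j * d + 1 | j. True}"
  define mu where "mu = mobius ?A Defs.refines ?z"
  interpret fp: fposet ?A Defs.refines by (rule Pi_fposet)
  have finA: "finite ?A" by (rule Pi_finite)
  have cardA: "card x \<in> {1..i}" if "x \<in> ?A" for x
    using Pi_card_le[OF that] part_card_pos[of "{1..i}" x] Pi_part[OF that] i by auto
  have "(\<Sum>l\<in>{1..i}. MobL d i l * int (stirS ?S l j))
      = (\<Sum>l\<in>{1..i}. \<Sum>x\<in>{x\<in>?A. card x = l}. mu x * int (stirS ?S (card x) j))"
    unfolding MobL_def mu_def by (simp add: sum_distrib_right)
  also have "\<dots> = (\<Sum>x\<in>?A. mu x * int (stirS ?S (card x) j))"
    by (rule sum.group) (use finA cardA in auto)
  also have "\<dots> = (\<Sum>x\<in>?A. \<Sum>y\<in>{y\<in>{y\<in>?A. card y = j}. Defs.refines x y}. mu x)"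
  proof (rule sum.cong)
    fix x assume x: "x \<in> ?A"
    have fx: "finite x" using finite_elements[OF _ Pi_part[OF x]] by simp
    have "stirS ?S (card x) j = card {y\<in>?A. Defs.refines x y \<and> card y = j}"
      using part_count_stirS[OF fx, of j ?S] coarsen_count[OF d x, of j] by simp
    also have "{y\<in>?A. Defs.refines x y \<and> card y = j} = {y\<in>{y\<in>?A. card y = j}. Defs.refines x y}"
      by auto
    finally show "mu x * int (stirS ?S (card x) j) = (\<Sum>y\<in>{y\<in>{y\<in>?A. card y = j}. Defs.refines x y}. mu x)"
      by simp
  qed simp
  also have "\<dots> = (\<Sum>y\<in>{y\<in>?A. card y = j}. \<Sum>x\<in>{x\<in>?A. Defs.refines x y}. mu x)"
    by (rule sum.swap_restrict) (use finA in auto)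
  also have "\<dots> = (\<Sum>y\<in>{y\<in>?A. card y = j}. if ?z = y then 1 else 0)"
  proof (rule sum.cong)
    fix y assume y: "y \<in> {y\<in>?A. card y = j}"
    have yA: "y \<in> ?A" using y by simp
    have eq: "{x\<in>?A. Defs.refines x y} = {w\<in>?A. Defs.refines ?z w \<and> Defs.refines w y}"
      using sing_ref by blast
    have "(\<Sum>w\<in>{w\<in>?A. Defs.refines ?z w \<and> Defs.refines w y}. mobius ?A Defs.refines ?z w) = (if ?z = y then 1 else 0)"
      by (rule fp.mobius_sum[OF sing_in yA sing_ref[OF yA]])
    thus "(\<Sum>x\<in>{x\<in>?A. Defs.refines x y}. mu x) = (if ?z = y then 1 else 0)"
      unfolding mu_def eq .
  qed simp
  also have "\<dots> = (if i = j then 1 else 0)"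
    using finA sing_in[of i d] sing_card[of i] by (simp add: sum.delta)
  finally show ?thesis .
qed

fun nodes :: "ltree \<Rightarrow> nat" where
  "nodes (Leaf i) = 0"
| "nodes (Node ts) = Suc (sum_list (map nodes ts))"

definition sg :: "ltree \<Rightarrow> int" where "sg t = (-1) ^ nodes t"

lemma sg_node: "sg (Node cs) = - prod_list (map sg cs)"
proof -
  have "prod_list (map sg cs) = (-1) ^ sum_list (map nodes cs)"
    by (induction cs) (auto simp: sg_def power_add)
  thus ?thesis by (simp add: sg_def)
qed

lemma sg_leaf[simp]: "sg (Leaf a) = 1" by (simp add: sg_def)

lemma len_leaves: "good_tree d t \<Longrightarrow> length (leaves t) = 1 + d * nodes t"
proof (induction t)
  case (Leaf x) thus ?case by simp
next
  case (Node ts)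
  have g: "length ts = d + 1" "\<forall>t\<in>set ts. good_tree d t" using Node.prems by auto
  have "length (leaves (Node ts)) = sum_list (map (\<lambda>t. length (leaves t)) ts)"
    by (simp add: length_concat o_def)
  also have "\<dots> = sum_list (map (\<lambda>t. 1 + d * nodes t) ts)"
    by (rule arg_cong[where f = sum_list], rule map_cong) (use Node.IH g in auto)
  also have "\<dots> = length ts + d * sum_list (map nodes ts)"
    by (induction ts) (auto simp: algebra_simps)
  finally show ?case using g by simp
qed

lemma leaves_ne: "good_tree d t \<Longrightarrow> leaves t \<noteq> []"
  using len_leaves by fastforce

lemma lmax_in: "leaves t \<noteq> [] \<Longrightarrow> lmax t \<in> set (leaves t)"
  unfolding lmax_def by simp

lemma lmax_child_le: "c \<in> set cs \<Longrightarrow> leaves c \<noteq> [] \<Longrightarrow> lmax c \<le> lmax (Node cs)"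
  unfolding lmax_def by (rule Max_mono) auto

lemma lmax_node_less:
  assumes "\<forall>c\<in>set cs. lmax c < v" "\<forall>c\<in>set cs. leaves c \<noteq> []" "cs \<noteq> []"
  shows "lmax (Node cs) < v"
proof -
  have ne: "set (leaves (Node cs)) \<noteq> {}" using assms(2,3) by (cases cs) auto
  have "\<forall>a\<in>set (leaves (Node cs)). a < v"
  proof
    fix a assume "a \<in> set (leaves (Node cs))"
    then obtain c where c: "c \<in> set cs" "a \<in> set (leaves c)" by auto
    have "a \<le> lmax c" unfolding lmax_def using c(2) by simp
    thus "a < v" using assms(1) c(1) by fastforce
  qed
  thus ?thesis unfolding lmax_def using ne by simp
qed

fun taul :: "nat \<Rightarrow> ltree list \<Rightarrow> ltree list" where
  "taul d (Node cs # rest) = cs @ rest"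
| "taul d (Leaf a # rest) = Node (Leaf a # take d rest) # drop d rest"
| "taul d [] = []"

definition vl :: "nat \<Rightarrow> ltree list \<Rightarrow> bool" where
  "vl d gs \<longleftrightarrow> (\<forall>t\<in>set gs. good_tree d t) \<and> distinct (concat (map leaves gs)) \<and>
     sorted_wrt (<) (map lmax gs)"

definition badl :: "nat \<Rightarrow> ltree list \<Rightarrow> bool" where
  "badl d gs \<longleftrightarrow> length gs \<ge> 1 \<and> length gs mod d = 1 mod d \<and> (\<forall>b. gs \<noteq> [Leaf b])"

lemma badl_cases:
  assumes d: "d \<ge> 1" and b: "badl d gs"
  obtains (N) cs rest where "gs = Node cs # rest"
    | (L) a rest where "gs = Leaf a # rest" "length rest \<ge> d"
proof (cases gs)
  case Nil thus ?thesis using b by (simp add: badl_def)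
next
  case (Cons t rest)
  show ?thesis
  proof (cases t)
    case (Node cs) thus ?thesis using Cons N by simp
  next
    case (Leaf a)
    have "rest \<noteq> []" using b Cons Leaf by (auto simp: badl_def)
    hence len: "length gs \<ge> 2" using Cons by (cases rest) auto
    have "length gs mod d = 1 mod d" using b by (simp add: badl_def)
    hence "length gs \<ge> d + 1" using dvd_gap[of 1 "length gs" d] len d by fastforce
    thus ?thesis using L Cons Leaf by simp
  qed
qed

lemma taul_leaves: "concat (map leaves (taul d gs)) = concat (map leaves gs)"
proof (cases gs)
  case (Cons t rest)
  have "concat (map leaves (take d rest)) @ concat (map leaves (drop d rest)) = concat (map leaves rest)"
    by (metis append_take_drop_id concat_append map_append)
  thus ?thesis using Cons by (cases t) auto
qed simp

lemma taul_sg: "badl d gs \<Longrightarrow> d \<ge> 1 \<Longrightarrow> prod_list (map sg (taul d gs)) = - prod_list (map sg gs)"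
proof (cases gs)
  case (Cons t rest)
  have "prod_list (map sg (take d rest)) * prod_list (map sg (drop d rest)) = prod_list (map sg rest)"
    by (metis append_take_drop_id map_append prod_list.append)
  thus ?thesis using Cons by (cases t) (auto simp: sg_node)
qed (auto simp: badl_def)

lemma vl_good_leaves: "vl d gs \<Longrightarrow> t \<in> set gs \<Longrightarrow> leaves t \<noteq> []"
  unfolding vl_def using leaves_ne by blast

lemma taul_vl:
  assumes d: "d \<ge> 1" and v: "vl d gs" and b: "badl d gs"
  shows "vl d (taul d gs)"
  using d b
proof (cases rule: badl_cases)
  case (N cs rest)
  have gN: "good_tree d (Node cs)" using v N by (simp add: vl_def)
  have cs: "length cs = d + 1" "sorted_wrt (<) (map lmax cs)" "\<forall>t\<in>set cs. good_tree d t"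
    using gN by auto
  have gr: "\<forall>t\<in>set rest. good_tree d t" using v N by (simp add: vl_def)
  have srt: "sorted_wrt (<) (map lmax rest)" "\<forall>r\<in>set rest. lmax (Node cs) < lmax r"
    using v N by (auto simp: vl_def)
  have "\<forall>c\<in>set cs. \<forall>r\<in>set rest. lmax c < lmax r"
  proof (intro ballI)
    fix c r assume "c \<in> set cs" "r \<in> set rest"
    moreover have "leaves c \<noteq> []" using leaves_ne cs(3) \<open>c \<in> set cs\<close> by blast
    ultimately show "lmax c < lmax r" using lmax_child_le srt(2) by fastforce
  qed
  hence "sorted_wrt (<) (map lmax (cs @ rest))" using cs(2) srt(1) by (simp add: sorted_wrt_append)
  moreover have "distinct (concat (map leaves (taul d gs)))" using v by (simp add: vl_def taul_leaves)
  ultimately show ?thesis using N cs(3) gr by (simp add: vl_def ball_Un)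
next
  case (L a rest)
  have gr: "\<forall>t\<in>set rest. good_tree d t" using v L by (simp add: vl_def)
  have srt: "sorted_wrt (<) (map lmax (Leaf a # rest))" using v L by (simp add: vl_def)
  have srt2: "sorted_wrt (<) (map lmax (Leaf a # take d rest @ drop d rest))" using srt by simp
  hence s1: "sorted_wrt (<) (map lmax (Leaf a # take d rest))"
    and s2: "sorted_wrt (<) (map lmax (drop d rest))"
    and s3: "\<forall>x\<in>set (Leaf a # take d rest). \<forall>y\<in>set (drop d rest). lmax x < lmax y"
    unfolding map_append append_Cons[symmetric] sorted_wrt_append by auto
  have gnew: "good_tree d (Node (Leaf a # take d rest))"
    using L s1 gr by (auto dest: in_set_takeD)
  have lnew: "lmax (Node (Leaf a # take d rest)) < lmax y" if "y \<in> set (drop d rest)" for y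
  proof (rule lmax_node_less)
    show "\<forall>c\<in>set (Leaf a # take d rest). lmax c < lmax y" using s3 that by blast
    show "\<forall>c\<in>set (Leaf a # take d rest). leaves c \<noteq> []"
      using gr leaves_ne by (auto dest: in_set_takeD)
  qed simp
  have "sorted_wrt (<) (map lmax (taul d gs))" using L s2 lnew by simp
  moreover have "distinct (concat (map leaves (taul d gs)))" using v by (simp add: vl_def taul_leaves)
  moreover have "\<forall>t\<in>set (taul d gs). good_tree d t" using L gnew gr by (auto dest: in_set_dropD)
  ultimately show ?thesis by (simp add: vl_def)
qed

lemma taul_badl:
  assumes d: "d \<ge> 1" and v: "vl d gs" and b: "badl d gs"
  shows "badl d (taul d gs)"
  using d b
proof (cases rule: badl_cases)
  case (N cs rest)
  have cs: "length cs = d + 1" using v N by (simp add: vl_def)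
  have "length (taul d gs) = length gs + d" using N cs by simp
  moreover have "length (taul d gs) \<ge> 2" using N cs d by simp
  ultimately show ?thesis using b unfolding badl_def
    by (auto simp: length_Suc_conv)
next
  case (L a rest)
  have e: "length gs = length (taul d gs) + d" using L by simp
  have "length (taul d gs) mod d = length gs mod d"
    unfolding e by simp
  moreover have "length (taul d gs) \<ge> 1" using L by simp
  moreover have "\<forall>b. taul d gs \<noteq> [Leaf b]" using L by simp
  ultimately show ?thesis using b unfolding badl_def by simp
qed

lemma taul_invol:
  assumes d: "d \<ge> 1" and v: "vl d gs" and b: "badl d gs"
  shows "taul d (taul d gs) = gs"
  using d b
proof (cases rule: badl_cases)
  case (N cs rest)
  have cs: "length cs = d + 1" "is_leaf (hd cs)" using v N by (auto simp: vl_def)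
  then obtain b cs' where cs': "cs = Leaf b # cs'" "length cs' = d"
    by (cases cs; cases "hd cs") auto
  show ?thesis using N cs' by simp
next
  case (L a rest)
  thus ?thesis by simp
qed

definition vf :: "nat \<Rightarrow> ltree set \<Rightarrow> bool" where
  "vf d F \<longleftrightarrow> finite F \<and> (\<forall>t\<in>F. good_tree d t \<and> distinct (leaves t)) \<and>
     disjoint_family_on (\<lambda>t. set (leaves t)) F"

definition lab :: "ltree set \<Rightarrow> nat set" where
  "lab F = (\<Union>t\<in>F. set (leaves t))"

definition sgnF :: "ltree set \<Rightarrow> int" where
  "sgnF F = (\<Prod>t\<in>F. sg t)"

definition srt :: "ltree set \<Rightarrow> ltree list" where
  "srt G = linorder.sorted_key_list_of_set (\<le>) lmax G"

lemma vf_disj: "vf d F \<Longrightarrow> t \<in> F \<Longrightarrow> t' \<in> F \<Longrightarrow> t \<noteq> t' \<Longrightarrow> set (leaves t) \<inter> set (leaves t') = {}"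
  unfolding vf_def disjoint_family_on_def by blast

lemma vf_ne: "vf d F \<Longrightarrow> t \<in> F \<Longrightarrow> leaves t \<noteq> []"
  unfolding vf_def using leaves_ne by blast

lemma vf_lmax_inj: "vf d G \<Longrightarrow> inj_on lmax G"
proof (rule inj_onI)
  fix t t' assume v: "vf d G" and tt: "t \<in> G" "t' \<in> G" "lmax t = lmax t'"
  show "t = t'"
  proof (rule ccontr)
    assume "t \<noteq> t'"
    hence "set (leaves t) \<inter> set (leaves t') = {}" using vf_disj v tt by blast
    thus False using lmax_in[OF vf_ne[OF v tt(1)]] lmax_in[OF vf_ne[OF v tt(2)]] tt(3) by auto
  qed
qed

lemma fik: "inj_on lmax G \<Longrightarrow> folding_insort_key (\<le>) (<) G lmax"
  by unfold_locales

lemma srt_unique: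
  assumes v: "vf d G"
  shows "sorted_wrt (<) (map lmax l) \<and> set l = G \<and> length l = card G \<longleftrightarrow> srt G = l"
  unfolding srt_def
  by (rule folding_insort_key.sorted_key_list_of_set_unique[OF fik[OF vf_lmax_inj[OF v]]])
     (use v in \<open>auto simp: vf_def\<close>)

lemma srt_props:
  assumes v: "vf d G"
  shows "sorted_wrt (<) (map lmax (srt G))" "set (srt G) = G" "length (srt G) = card G"
  using srt_unique[OF v, of "srt G"] by auto

lemma strict_distinct: "sorted_wrt (<) (map (f::'a \<Rightarrow> nat) xs) \<Longrightarrow> distinct xs"
  using strict_sorted_iff distinct_map by blast

lemma srt_unique2:
  assumes v: "vf d G" and s: "sorted_wrt (<) (map lmax l)" and e: "set l = G"
  shows "srt G = l"
proof -
  have "distinct l" using strict_distinct[OF s] .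
  hence "length l = card G" using e distinct_card by fastforce
  thus ?thesis using srt_unique[OF v] s e by blast
qed

lemma vl_of_vf: "vf d G \<Longrightarrow> vl d (srt G)"
proof -
  assume v: "vf d G"
  note sp = srt_props[OF v]
  have dG: "distinct (srt G)" using strict_distinct[OF sp(1)] .
  have injl: "inj_on leaves G"
  proof (rule inj_onI)
    fix t t' assume tt: "t \<in> G" "t' \<in> G" "leaves t = leaves t'"
    show "t = t'"
    proof (rule ccontr)
      assume "t \<noteq> t'"
      hence "set (leaves t) \<inter> set (leaves t') = {}" using vf_disj v tt by blast
      thus False using vf_ne[OF v tt(1)] tt(3) by simp
    qed
  qed
  have "distinct (concat (map leaves (srt G)))"
  proof (rule distinct_concat)
    show "distinct (map leaves (srt G))" using dG injl sp(2) by (simp add: distinct_map)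
    show "\<And>ys. ys \<in> set (map leaves (srt G)) \<Longrightarrow> distinct ys" using v sp(2) by (auto simp: vf_def)
    show "\<And>ys zs. ys \<in> set (map leaves (srt G)) \<Longrightarrow> zs \<in> set (map leaves (srt G)) \<Longrightarrow> ys \<noteq> zs \<Longrightarrow> set ys \<inter> set zs = {}"
      using vf_disj[OF v] sp(2) by auto
  qed
  thus "vl d (srt G)" using sp v unfolding vl_def vf_def by auto
qed

lemma vf_of_vl:
  assumes v: "vl d gs"
  shows "vf d (set gs)" "card (set gs) = length gs"
proof -
  have s: "sorted_wrt (<) (map lmax gs)" using v by (simp add: vl_def)
  have dg: "distinct gs" using strict_distinct[OF s] .
  thus "card (set gs) = length gs" by (simp add: distinct_card)
  have dc: "distinct (concat (map leaves gs))" using v by (simp add: vl_def)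
  have dl: "\<forall>t\<in>set gs. distinct (leaves t)" using dc by (simp add: distinct_concat_iff)
  have "disjoint_family_on (\<lambda>t. set (leaves t)) (set gs)"
    unfolding disjoint_family_on_def
  proof (intro ballI impI)
    fix t t' assume tt: "t \<in> set gs" "t' \<in> set gs" "t \<noteq> t'"
    have "lmax t \<noteq> lmax t'"
      using dg tt s strict_sorted_iff distinct_map inj_on_def by (metis (no_types, lifting))
    hence "leaves t \<noteq> leaves t'" unfolding lmax_def by auto
    thus "set (leaves t) \<inter> set (leaves t') = {}" using dc tt by (auto simp: distinct_concat_iff)
  qed
  thus "vf d (set gs)" using v dl unfolding vl_def vf_def by auto
qed

lemma lab_set: "lab (set gs) = set (concat (map leaves gs))"
  unfolding lab_def by auto

lemma sgnF_set: "distinct gs \<Longrightarrow> sgnF (set gs) = prod_list (map sg gs)"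
  unfolding sgnF_def by (simp add: prod.distinct_set_conv_list)

definition tau :: "nat \<Rightarrow> ltree set \<Rightarrow> ltree set" where
  "tau d G = set (taul d (srt G))"

definition badg :: "nat \<Rightarrow> ltree set \<Rightarrow> bool" where
  "badg d G \<longleftrightarrow> card G \<ge> 1 \<and> card G mod d = 1 mod d \<and> (\<forall>b. G \<noteq> {Leaf b})"

lemma badl_srt: "vf d G \<Longrightarrow> badg d G \<Longrightarrow> badl d (srt G)"
  using srt_props[of d G] unfolding badg_def badl_def by (metis list.set(1) list.set(2))

lemma tau_props:
  assumes d: "d \<ge> 1" and v: "vf d G" and b: "badg d G"
  shows "vf d (tau d G)" "lab (tau d G) = lab G" "badg d (tau d G)" "tau d (tau d G) = G"
    "sgnF (tau d G) = - sgnF G"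
proof -
  define gs where "gs = srt G"
  have vgs: "vl d gs" unfolding gs_def by (rule vl_of_vf[OF v])
  have bgs: "badl d gs" unfolding gs_def by (rule badl_srt[OF v b])
  have Ggs: "set gs = G" unfolding gs_def using srt_props[OF v] by simp
  define gs' where "gs' = taul d gs"
  have vgs': "vl d gs'" unfolding gs'_def by (rule taul_vl[OF d vgs bgs])
  have bgs': "badl d gs'" unfolding gs'_def by (rule taul_badl[OF d vgs bgs])
  have tG: "tau d G = set gs'" unfolding tau_def gs'_def gs_def by simp
  show vt: "vf d (tau d G)" unfolding tG by (rule vf_of_vl(1)[OF vgs'])
  have ct: "card (set gs') = length gs'" by (rule vf_of_vl(2)[OF vgs'])
  show "lab (tau d G) = lab G"
  proof -
    have "lab (set gs') = lab (set gs)" unfolding lab_set gs'_def taul_leaves ..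
    thus ?thesis using tG Ggs by simp
  qed
  show "badg d (tau d G)"
    unfolding badg_def tG ct
  proof (intro conjI allI)
    show "1 \<le> length gs'" "length gs' mod d = 1 mod d" using bgs' by (auto simp: badl_def)
    fix b show "set gs' \<noteq> {Leaf b}"
    proof
      assume e: "set gs' = {Leaf b}"
      hence "length gs' = 1" using ct by simp
      then obtain x where "gs' = [x]" by (cases gs') auto
      thus False using e bgs' by (auto simp: badl_def)
    qed
  qed
  have srt': "srt (set gs') = gs'"
    by (rule srt_unique2[OF vf_of_vl(1)[OF vgs']]) (use vgs' in \<open>auto simp: vl_def\<close>)
  show "tau d (tau d G) = G"
  proof -
    have "tau d (tau d G) = tau d (set gs')" by (simp only: tG)
    also have "\<dots> = set (taul d (srt (set gs')))" by (rule tau_def)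
    also have "\<dots> = set (taul d gs')" unfolding srt' ..
    also have "\<dots> = G" unfolding gs'_def using taul_invol[OF d vgs bgs] Ggs by simp
    finally show ?thesis .
  qed
  have dgs: "distinct gs" using vgs strict_distinct unfolding vl_def by blast
  have dgs': "distinct gs'" using vgs' strict_distinct unfolding vl_def by blast
  show "sgnF (tau d G) = - sgnF G"
  proof -
    have "sgnF (tau d G) = sgnF (set gs')" using tG by simp
    also have "\<dots> = prod_list (map sg gs')" by (rule sgnF_set[OF dgs'])
    also have "\<dots> = - prod_list (map sg gs)" unfolding gs'_def by (rule taul_sg[OF bgs d])
    also have "prod_list (map sg gs) = sgnF G" using sgnF_set[OF dgs] Ggs by simp
    finally show ?thesis .
  qed
qed

definition TT :: "nat \<Rightarrow> nat set \<Rightarrow> nat \<Rightarrow> ltree set" where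
  "TT d X k = {t. good_tree d t \<and> set (leaves t) \<subseteq> X \<and> length (leaves t) \<le> k}"

lemma sum_list_ge_len: "\<forall>x\<in>set xs. f x \<ge> (1::nat) \<Longrightarrow> sum_list (map f xs) \<ge> length xs"
  by (induction xs) auto

lemma child_len:
  assumes g: "good_tree d (Node ts)" and d: "d \<ge> 1" and c: "c \<in> set ts"
  shows "length (leaves c) + d \<le> length (leaves (Node ts))"
proof -
  obtain xs ys where ts: "ts = xs @ c # ys" using split_list[OF c] by blast
  have gs: "\<forall>t\<in>set ts. good_tree d t" "length ts = d + 1" using g by auto
  have ge1: "\<forall>t\<in>set ts. length (leaves t) \<ge> 1"
  proof
    fix t assume "t \<in> set ts"
    hence "leaves t \<noteq> []" using gs(1) leaves_ne by blast
    thus "length (leaves t) \<ge> 1" by (cases "leaves t") auto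
  qed
  have "length (leaves (Node ts)) = sum_list (map (\<lambda>t. length (leaves t)) ts)"
    by (simp add: length_concat o_def)
  also have "\<dots> = sum_list (map (\<lambda>t. length (leaves t)) xs) + length (leaves c) + sum_list (map (\<lambda>t. length (leaves t)) ys)"
    unfolding ts by simp
  also have "sum_list (map (\<lambda>t. length (leaves t)) xs) \<ge> length xs"
    by (rule sum_list_ge_len) (use ge1 ts in auto)
  moreover have "sum_list (map (\<lambda>t. length (leaves t)) ys) \<ge> length ys"
    by (rule sum_list_ge_len) (use ge1 ts in auto)
  moreover have "length xs + length ys = d" using gs(2) ts by simp
  ultimately show ?thesis by linarith
qed

lemma TT_fin:
  assumes X: "finite X" and d: "d \<ge> 1"
  shows "finite (TT d X k)"
proof (induction k)
  case 0
  have "TT d X 0 = {}" unfolding TT_def using leaves_ne by fastforce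
  thus ?case by simp
next
  case (Suc k)
  have "TT d X (Suc k) \<subseteq> Leaf ` X \<union> Node ` {ts. set ts \<subseteq> TT d X k \<and> length ts = d + 1}"
  proof
    fix t assume t: "t \<in> TT d X (Suc k)"
    show "t \<in> Leaf ` X \<union> Node ` {ts. set ts \<subseteq> TT d X k \<and> length ts = d + 1}"
    proof (cases t)
      case (Leaf x) thus ?thesis using t unfolding TT_def by auto
    next
      case (Node ts)
      have g: "good_tree d (Node ts)" using t Node unfolding TT_def by simp
      have "set ts \<subseteq> TT d X k"
      proof
        fix c assume c: "c \<in> set ts"
        have "length (leaves c) + d \<le> length (leaves (Node ts))" by (rule child_len[OF g d c])
        moreover have "length (leaves (Node ts)) \<le> Suc k" using t Node unfolding TT_def by simp
        moreover have "set (leaves c) \<subseteq> X" using t Node c unfolding TT_def by auto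
        moreover have "good_tree d c" using g c by simp
        ultimately show "c \<in> TT d X k" unfolding TT_def using d by simp
      qed
      thus ?thesis using Node g by auto
    qed
  qed
  moreover have "finite (Leaf ` X \<union> Node ` {ts. set ts \<subseteq> TT d X k \<and> length ts = d + 1})"
    using X Suc.IH finite_lists_length_eq by blast
  ultimately show ?case using finite_subset by blast
qed

definition Fors :: "nat \<Rightarrow> nat set \<Rightarrow> ltree set set" where
  "Fors d X = {F. vf d F \<and> lab F = X}"

lemma Fors_fin:
  assumes X: "finite X" and d: "d \<ge> 1"
  shows "finite (Fors d X)"
proof -
  have "Fors d X \<subseteq> Pow (TT d X (card X))"
  proof
    fix F assume F: "F \<in> Fors d X"
    have "F \<subseteq> TT d X (card X)"
    proof
      fix t assume t: "t \<in> F"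
      have sub: "set (leaves t) \<subseteq> X" using F t unfolding Fors_def lab_def by auto
      have "length (leaves t) = card (set (leaves t))" using F t unfolding Fors_def vf_def
        by (simp add: distinct_card)
      also have "\<dots> \<le> card X" by (rule card_mono[OF X sub])
      finally show "t \<in> TT d X (card X)" using F t sub unfolding TT_def Fors_def vf_def by auto
    qed
    thus "F \<in> Pow (TT d X (card X))" by simp
  qed
  thus ?thesis using TT_fin[OF X d] finite_subset by blast
qed

abbreviation Sd :: "nat \<Rightarrow> nat set" where "Sd d \<equiv> {j * d + 1 | j. True}"

definition grp :: "nat \<Rightarrow> ltree set \<Rightarrow> nat \<Rightarrow> ltree set set set" where
  "grp d F j = {P. partition_on F P \<and> card P = j \<and> (\<forall>G\<in>P. card G \<in> Sd d)}"

definition Pairs :: "nat \<Rightarrow> nat set \<Rightarrow> nat \<Rightarrow> (ltree set \<times> ltree set set) set" where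
  "Pairs d X j = Sigma (Fors d X) (\<lambda>F. grp d F j)"

definition PS :: "nat \<Rightarrow> nat set \<Rightarrow> nat \<Rightarrow> int" where
  "PS d X j = (\<Sum>p\<in>Pairs d X j. sgnF (fst p))"

lemma vf_subset: "vf d F \<Longrightarrow> G \<subseteq> F \<Longrightarrow> vf d G"
  unfolding vf_def disjoint_family_on_def by (metis (no_types, lifting) finite_subset subsetD)

lemma lab_Un: "lab (A \<union> B) = lab A \<union> lab B" unfolding lab_def by auto

lemma lab_diff_disj: "vf d F \<Longrightarrow> G \<subseteq> F \<Longrightarrow> lab (F - G) \<inter> lab G = {}"
  unfolding lab_def using vf_disj by fastforce

lemma lab_diff: "vf d F \<Longrightarrow> G \<subseteq> F \<Longrightarrow> lab (F - G) = lab F - lab G"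
  using lab_diff_disj[of d F G] unfolding lab_def by blast

lemma sgnF_Un: "finite A \<Longrightarrow> finite B \<Longrightarrow> A \<inter> B = {} \<Longrightarrow> sgnF (A \<union> B) = sgnF A * sgnF B"
  unfolding sgnF_def by (rule prod.union_disjoint)

lemma sgnF_ne0: "finite A \<Longrightarrow> sgnF A \<noteq> 0"
  unfolding sgnF_def sg_def by simp

lemma lab_ne: "vf d G \<Longrightarrow> G \<noteq> {} \<Longrightarrow> lab G \<noteq> {}"
  unfolding lab_def using vf_ne by fastforce

lemma Pairs_fin: "finite X \<Longrightarrow> d \<ge> 1 \<Longrightarrow> finite (Pairs d X j)"
proof -
  assume X: "finite X" and d: "d \<ge> 1"
  have "\<And>F. F \<in> Fors d X \<Longrightarrow> finite (grp d F j)"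
  proof -
    fix F assume "F \<in> Fors d X"
    hence "finite F" unfolding Fors_def vf_def by simp
    hence "finite (Pow (Pow F))" by simp
    moreover have "grp d F j \<subseteq> Pow (Pow F)" unfolding grp_def partition_on_def by auto
    ultimately show "finite (grp d F j)" using finite_subset by blast
  qed
  thus ?thesis unfolding Pairs_def using Fors_fin[OF X d] by (rule_tac finite_SigmaI) auto
qed

lemma grp_sub: "P \<in> grp d F j \<Longrightarrow> G \<in> P \<Longrightarrow> G \<subseteq> F"
  unfolding grp_def using partition_onD1 by blast

lemma ga_unique:
  assumes P: "partition_on F P" and v: "vf d F" and G: "G \<in> P" "G' \<in> P"
    and a: "a \<in> lab G" "a \<in> lab G'"
  shows "G = G'"
proof -
  obtain t where t: "t \<in> G" "a \<in> set (leaves t)" using a(1) unfolding lab_def by blast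
  obtain t' where t': "t' \<in> G'" "a \<in> set (leaves t')" using a(2) unfolding lab_def by blast
  have tF: "t \<in> F" "t' \<in> F" using t t' G partition_onD1[OF P] by blast+
  have "t = t'" using vf_disj[OF v tF] t t' by blast
  thus ?thesis using part_eq_of_inter[OF P G(1) G(2)] t t' by blast
qed

definition ga :: "nat \<Rightarrow> ltree set set \<Rightarrow> ltree set" where
  "ga a P = (THE G. G \<in> P \<and> a \<in> lab G)"

lemma ga_props:
  assumes P: "partition_on F P" and v: "vf d F" and a: "a \<in> lab F"
  shows "ga a P \<in> P" "a \<in> lab (ga a P)" "\<And>G. G \<in> P \<Longrightarrow> a \<in> lab G \<Longrightarrow> G = ga a P"
proof -
  obtain t where t: "t \<in> F" "a \<in> set (leaves t)" using a unfolding lab_def by blast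
  then obtain G where G: "G \<in> P" "t \<in> G" using partition_onD1[OF P] by blast
  have aG: "a \<in> lab G" using G t unfolding lab_def by blast
  have eq: "ga a P = G" unfolding ga_def
    by (rule the_equality) (use G aG ga_unique[OF P v] in auto)
  show "ga a P \<in> P" "a \<in> lab (ga a P)" using eq G aG by auto
  show "\<And>G'. G' \<in> P \<Longrightarrow> a \<in> lab G' \<Longrightarrow> G' = ga a P" using eq ga_unique[OF P v G(1)] aG by blast
qed

lemma swap_group:
  assumes F: "F \<in> Fors d X" and P: "P \<in> grp d F j" and G: "G \<in> P"
    and vG': "vf d G'" and lG': "lab G' = lab G" and cG': "card G' \<in> Sd d" and neG': "G' \<noteq> {}"
  shows "(F - G) \<union> G' \<in> Fors d X" "(P - {G}) \<union> {G'} \<in> grp d ((F - G) \<union> G') j"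
    "(F - G) \<inter> G' = {}" "G' \<notin> P - {G}"
proof -
  have vF: "vf d F" and lF: "lab F = X" using F unfolding Fors_def by auto
  have Pp: "partition_on F P" "card P = j" "\<forall>H\<in>P. card H \<in> Sd d" using P unfolding grp_def by auto
  have GF: "G \<subseteq> F" using grp_sub[OF P G] .
  have ld: "lab (F - G) \<inter> lab G = {}" by (rule lab_diff_disj[OF vF GF])
  show dis: "(F - G) \<inter> G' = {}"
  proof (rule ccontr)
    assume "(F - G) \<inter> G' \<noteq> {}"
    then obtain t where t: "t \<in> F - G" "t \<in> G'" by blast
    have "leaves t \<noteq> []" using vf_ne[OF vG' t(2)] .
    then obtain x where x: "x \<in> set (leaves t)" by (cases "leaves t") auto
    have "x \<in> lab (F - G)" "x \<in> lab G'" using x t unfolding lab_def by blast+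
    thus False using ld lG' by blast
  qed
  have finF: "finite F" and finG': "finite G'" using vF vG' unfolding vf_def by auto
  have vF': "vf d ((F - G) \<union> G')"
    unfolding vf_def
  proof (intro conjI)
    show "finite ((F - G) \<union> G')" using finF finG' by simp
    show "\<forall>t\<in>F - G \<union> G'. good_tree d t \<and> distinct (leaves t)" using vF vG' unfolding vf_def by blast
    show "disjoint_family_on (\<lambda>t. set (leaves t)) ((F - G) \<union> G')"
      unfolding disjoint_family_on_def
    proof (intro ballI impI)
      fix t t' assume tt: "t \<in> F - G \<union> G'" "t' \<in> F - G \<union> G'" "t \<noteq> t'"
      have cross: "set (leaves u) \<inter> set (leaves u') = {}" if "u \<in> F - G" "u' \<in> G'" for u u'
      proof -
        have "set (leaves u) \<subseteq> lab (F - G)" "set (leaves u') \<subseteq> lab G'" using that unfolding lab_def by blast+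
        thus ?thesis using ld lG' by blast
      qed
      show "set (leaves t) \<inter> set (leaves t') = {}"
        using tt vf_disj[OF vF, of t t'] vf_disj[OF vG', of t t'] cross[of t t'] cross[of t' t] by blast
    qed
  qed
  have lGF: "lab G \<subseteq> lab F" using GF unfolding lab_def by blast
  have "lab ((F - G) \<union> G') = X" unfolding lab_Un lab_diff[OF vF GF] lG' using lGF lF by blast
  thus "(F - G) \<union> G' \<in> Fors d X" using vF' unfolding Fors_def by blast
  have UPG: "\<Union>(P - {G}) = F - G"
  proof
    show "\<Union>(P - {G}) \<subseteq> F - G" using part_disj[OF Pp(1) G] partition_onD1[OF Pp(1)] by blast
    show "F - G \<subseteq> \<Union>(P - {G})" using partition_onD1[OF Pp(1)] by blast
  qed
  show nin: "G' \<notin> P - {G}"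
  proof
    assume "G' \<in> P - {G}"
    hence "G' \<subseteq> F - G" using UPG by blast
    thus False using dis neG' by blast
  qed
  have part: "partition_on ((F - G) \<union> G') ((P - {G}) \<union> {G'})"
  proof (rule partition_onI)
    show "\<Union>(P - {G} \<union> {G'}) = F - G \<union> G'" using UPG by blast
    show "{} \<notin> P - {G} \<union> {G'}" using partition_onD3[OF Pp(1)] neG' by blast
    fix p q assume pq: "p \<in> P - {G} \<union> {G'}" "q \<in> P - {G} \<union> {G'}" "p \<noteq> q"
    have HG': "H \<inter> G' = {}" if "H \<in> P - {G}" for H using that UPG dis by blast
    show "disjnt p q" unfolding disjnt_def
      using pq part_disj[OF Pp(1)] HG' by (metis DiffD1 Int_commute Un_iff singletonD)
  qed
  have fP: "finite P" using finite_elements[OF finF Pp(1)] .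
  have "card ((P - {G}) \<union> {G'}) = card P"
  proof -
    have "card P > 0" using fP G card_gt_0_iff by blast
    thus ?thesis using nin fP G by simp
  qed
  moreover have "\<forall>H\<in>(P - {G}) \<union> {G'}. card H \<in> Sd d" using Pp(3) cG' by blast
  ultimately show "(P - {G}) \<union> {G'} \<in> grp d ((F - G) \<union> G') j" using part Pp(2) unfolding grp_def by blast
qed

definition iota :: "nat \<Rightarrow> nat \<Rightarrow> ltree set \<times> ltree set set \<Rightarrow> ltree set \<times> ltree set set" where
  "iota d a p = ((fst p - ga a (snd p)) \<union> tau d (ga a (snd p)),
                 (snd p - {ga a (snd p)}) \<union> {tau d (ga a (snd p))})"

lemma iota_props:
  assumes d: "d \<ge> 1" and p: "p \<in> Pairs d X j" and bad: "{Leaf a} \<notin> snd p" and a: "a \<in> X"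
  shows "iota d a p \<in> Pairs d X j" "{Leaf a} \<notin> snd (iota d a p)" "iota d a (iota d a p) = p"
    "sgnF (fst (iota d a p)) + sgnF (fst p) = 0"
proof -
  obtain F P where pFP: "p = (F, P)" by (cases p)
  have F: "F \<in> Fors d X" and P: "P \<in> grp d F j" using p pFP unfolding Pairs_def by auto
  have vF: "vf d F" and lF: "lab F = X" using F unfolding Fors_def by auto
  have Pp: "partition_on F P" "\<forall>H\<in>P. card H \<in> Sd d" using P unfolding grp_def by auto
  define G where "G = ga a P"
  have aF: "a \<in> lab F" using a lF by simp
  have GP: "G \<in> P" unfolding G_def by (rule ga_props(1)[OF Pp(1) vF aF])
  have aG: "a \<in> lab G" unfolding G_def by (rule ga_props(2)[OF Pp(1) vF aF])
  have GF: "G \<subseteq> F" using grp_sub[OF P GP] .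
  have vG: "vf d G" using vf_subset[OF vF GF] .
  have cG: "card G \<in> Sd d" using Pp(2) GP by blast
  then obtain i where ci: "card G = i * d + 1" by blast
  have bG: "badg d G"
    unfolding badg_def
  proof (intro conjI allI)
    show "1 \<le> card G" using ci by simp
    show "card G mod d = 1 mod d" using ci mod_mult_self3[of i d 1] by simp
    fix b show "G \<noteq> {Leaf b}"
    proof
      assume Gb: "G = {Leaf b}"
      hence "a = b" using aG unfolding lab_def by simp
      thus False using Gb GP bad pFP by simp
    qed
  qed
  define G' where "G' = tau d G"
  note tp = tau_props[OF d vG bG, folded G'_def]
  have cG': "card G' \<in> Sd d"
    using tp(3) memS[of "card G'" d] unfolding badg_def by auto
  have neG': "G' \<noteq> {}" using tp(3) unfolding badg_def by auto
  note sw = swap_group[OF F P GP tp(1) tp(2) cG' neG']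
  define F' where "F' = (F - G) \<union> G'"
  define P' where "P' = (P - {G}) \<union> {G'}"
  have ip: "iota d a p = (F', P')" unfolding iota_def pFP F'_def P'_def G'_def G_def by simp
  show "iota d a p \<in> Pairs d X j" unfolding ip Pairs_def F'_def P'_def using sw(1,2) by simp
  show nb: "{Leaf a} \<notin> snd (iota d a p)"
  proof
    assume "{Leaf a} \<in> snd (iota d a p)"
    hence "{Leaf a} \<in> P - {G} \<or> {Leaf a} = G'" unfolding ip P'_def by auto
    thus False using bad pFP tp(3) unfolding badg_def by auto
  qed
  have vF': "vf d F'" and lF': "lab F' = X" using sw(1) unfolding F'_def Fors_def by auto
  have P'p: "partition_on F' P'" using sw(2) unfolding F'_def P'_def grp_def by auto
  have aF': "a \<in> lab F'" using lF' a by simp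
  have G'P': "G' \<in> P'" unfolding P'_def by simp
  have aG': "a \<in> lab G'" using tp(2) aG by simp
  have gaP': "ga a P' = G'" using ga_props(3)[OF P'p vF' aF' G'P' aG'] by simp
  have e1: "F' - G' = F - G" unfolding F'_def using sw(3) by blast
  have e2: "P' - {G'} = P - {G}" unfolding P'_def using sw(4) by blast
  show "iota d a (iota d a p) = p"
  proof -
    have "iota d a (iota d a p) = iota d a (F', P')" using ip by simp
    also have "\<dots> = ((F' - G') \<union> tau d G', (P' - {G'}) \<union> {tau d G'})"
      unfolding iota_def fst_conv snd_conv gaP' ..
    also have "\<dots> = (F, P)" unfolding e1 e2 tp(4) using GF GP by auto
    finally show ?thesis using pFP by simp
  qed
  have finF: "finite F" using vF unfolding vf_def by simp
  have finG': "finite G'" using tp(1) unfolding vf_def by simp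
  have "sgnF F' = sgnF (F - G) * sgnF G'"
    unfolding F'_def by (rule sgnF_Un) (use finF finG' sw(3) in auto)
  moreover have "sgnF F = sgnF (F - G) * sgnF G"
  proof -
    have "F = (F - G) \<union> G" using GF by blast
    hence "sgnF F = sgnF ((F - G) \<union> G)" by simp
    also have "\<dots> = sgnF (F - G) * sgnF G" by (rule sgnF_Un) (use finF GF finite_subset in auto)
    finally show ?thesis .
  qed
  moreover have "fst (iota d a p) = F'" using ip by simp
  moreover have "fst p = F" using pFP by simp
  ultimately show "sgnF (fst (iota d a p)) + sgnF (fst p) = 0" using tp(5) by simp
qed

lemma bad_sum_zero:
  assumes X: "finite X" and d: "d \<ge> 1" and a: "a \<in> X"
  shows "(\<Sum>p\<in>{p\<in>Pairs d X j. {Leaf a} \<notin> snd p}. sgnF (fst p)) = 0"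
proof (rule sum_involution_eq_0[where h = "iota d a"])
  fix p assume p: "p \<in> {p\<in>Pairs d X j. {Leaf a} \<notin> snd p}"
  note ip = iota_props[OF d _ _ a, of p j]
  show "sgnF (fst (iota d a p)) + sgnF (fst p) = 0" using ip p by auto
  show "iota d a p \<in> {p\<in>Pairs d X j. {Leaf a} \<notin> snd p}" using ip p by auto
  show "iota d a (iota d a p) = p" using ip p by auto
  show "iota d a p \<noteq> p"
  proof
    assume e: "iota d a p = p"
    have "sgnF (fst p) + sgnF (fst p) = 0" using ip p e by auto
    moreover have "finite (fst p)" using p unfolding Pairs_def Fors_def vf_def by auto
    ultimately show False using sgnF_ne0 by fastforce
  qed
qed

lemma good_sum:
  assumes X: "finite X" and d: "d \<ge> 1" and a: "a \<in> X" and j: "j \<ge> 1"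
  shows "(\<Sum>p\<in>{p\<in>Pairs d X j. {Leaf a} \<in> snd p}. sgnF (fst p)) = PS d (X - {a}) (j - 1)"
  unfolding PS_def
proof (rule sum.reindex_bij_witness[where j = "\<lambda>(F, P). (F - {Leaf a}, P - {{Leaf a}})"
      and i = "\<lambda>(F, P). (insert (Leaf a) F, insert {Leaf a} P)"])
  fix p assume p: "p \<in> {p\<in>Pairs d X j. {Leaf a} \<in> snd p}"
  obtain F P where pFP: "p = (F, P)" by (cases p)
  have F: "F \<in> Fors d X" and P: "P \<in> grp d F j" and LP: "{Leaf a} \<in> P"
    using p pFP unfolding Pairs_def by auto
  have vF: "vf d F" and lF: "lab F = X" using F unfolding Fors_def by auto
  have Pp: "partition_on F P" "card P = j" "\<forall>H\<in>P. card H \<in> Sd d" using P unfolding grp_def by auto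
  have LF: "Leaf a \<in> F" using LP partition_onD1[OF Pp(1)] by blast
  show "(case case p of (F, P) \<Rightarrow> (F - {Leaf a}, P - {{Leaf a}}) of
          (F, P) \<Rightarrow> (insert (Leaf a) F, insert {Leaf a} P)) = p"
    using pFP LF LP by auto
  have F1: "F - {Leaf a} \<in> Fors d (X - {a})"
  proof -
    have "vf d (F - {Leaf a})" using vf_subset[OF vF] by blast
    moreover have "lab (F - {Leaf a}) = X - {a}"
      using lab_diff[OF vF, of "{Leaf a}"] LF lF by (simp add: lab_def)
    ultimately show ?thesis unfolding Fors_def by blast
  qed
  have disj: "disjnt {Leaf a} (\<Union>(P - {{Leaf a}}))"
    using part_disj[OF Pp(1) LP] unfolding disjnt_def by blast
  have eqP: "P = insert {Leaf a} (P - {{Leaf a}})" using LP by blast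
  have "partition_on F (insert {Leaf a} (P - {{Leaf a}}))" using Pp(1) eqP by simp
  hence P1: "partition_on (F - {Leaf a}) (P - {{Leaf a}})"
    using partition_on_insert[OF disj] by blast
  have finF: "finite F" using vF unfolding vf_def by simp
  have fP: "finite P" using finite_elements[OF finF Pp(1)] .
  have cP1: "card (P - {{Leaf a}}) = j - 1" using Pp(2) LP fP by simp
  have "P - {{Leaf a}} \<in> grp d (F - {Leaf a}) (j - 1)"
    unfolding grp_def using P1 cP1 Pp(3) by blast
  thus "(case p of (F, P) \<Rightarrow> (F - {Leaf a}, P - {{Leaf a}})) \<in> Pairs d (X - {a}) (j - 1)"
    using F1 pFP unfolding Pairs_def by simp
  have "sgnF F = sg (Leaf a) * sgnF (F - {Leaf a})"
    unfolding sgnF_def using prod.remove[OF finF LF] .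
  thus "sgnF (fst (case p of (F, P) \<Rightarrow> (F - {Leaf a}, P - {{Leaf a}}))) = sgnF (fst p)"
    using pFP by simp
next
  fix q assume q: "q \<in> Pairs d (X - {a}) (j - 1)"
  obtain F P where qFP: "q = (F, P)" by (cases q)
  have F: "F \<in> Fors d (X - {a})" and P: "P \<in> grp d F (j - 1)"
    using q qFP unfolding Pairs_def by auto
  have vF: "vf d F" and lF: "lab F = X - {a}" using F unfolding Fors_def by auto
  have Pp: "partition_on F P" "card P = j - 1" "\<forall>H\<in>P. card H \<in> Sd d" using P unfolding grp_def by auto
  have LF: "Leaf a \<notin> F"
  proof
    assume "Leaf a \<in> F"
    hence "a \<in> lab F" unfolding lab_def by force
    thus False using lF by simp
  qed
  have LP: "{Leaf a} \<notin> P" using LF partition_onD1[OF Pp(1)] by blast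
  show "(case case q of (F, P) \<Rightarrow> (insert (Leaf a) F, insert {Leaf a} P) of
          (F, P) \<Rightarrow> (F - {Leaf a}, P - {{Leaf a}})) = q"
    using qFP LF LP by auto
  have vF1: "vf d (insert (Leaf a) F)"
    unfolding vf_def
  proof (intro conjI)
    show "finite (insert (Leaf a) F)" using vF unfolding vf_def by simp
    show "\<forall>t\<in>insert (Leaf a) F. good_tree d t \<and> distinct (leaves t)" using vF unfolding vf_def by simp
    show "disjoint_family_on (\<lambda>t. set (leaves t)) (insert (Leaf a) F)"
      unfolding disjoint_family_on_def
    proof (intro ballI impI)
      fix t t' assume tt: "t \<in> insert (Leaf a) F" "t' \<in> insert (Leaf a) F" "t \<noteq> t'"
      have aF: "a \<notin> set (leaves u)" if "u \<in> F" for u using that lF unfolding lab_def by blast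
      show "set (leaves t) \<inter> set (leaves t') = {}"
        using tt vf_disj[OF vF, of t t'] aF by auto
    qed
  qed
  have lF1: "lab (insert (Leaf a) F) = X" using lF a unfolding lab_def by auto
  have disj: "disjnt {Leaf a} (\<Union>P)" using LF partition_onD1[OF Pp(1)] unfolding disjnt_def by blast
  have P1: "partition_on (insert (Leaf a) F) (insert {Leaf a} P)"
    using partition_on_insert[OF disj] Pp(1) LF by simp
  have finF: "finite F" using vF unfolding vf_def by simp
  have fP: "finite P" using finite_elements[OF finF Pp(1)] .
  have cP1: "card (insert {Leaf a} P) = j" using Pp(2) LP fP j by simp
  have cS: "card {Leaf a} \<in> Sd d" by (auto intro: exI[of _ 0])
  have "insert {Leaf a} P \<in> grp d (insert (Leaf a) F) j"
    unfolding grp_def using P1 cP1 Pp(3) cS by blast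
  thus "(case q of (F, P) \<Rightarrow> (insert (Leaf a) F, insert {Leaf a} P)) \<in> {p\<in>Pairs d X j. {Leaf a} \<in> snd p}"
    using qFP vF1 lF1 unfolding Pairs_def Fors_def by simp
qed

lemma Fors_empty: "Fors d {} = {{}}"
proof
  show "Fors d {} \<subseteq> {{}}"
  proof
    fix F assume F: "F \<in> Fors d {}"
    have "F = {}"
    proof (rule ccontr)
      assume "F \<noteq> {}"
      then obtain t where "t \<in> F" by blast
      hence "leaves t \<noteq> []" "set (leaves t) \<subseteq> lab F" using vf_ne F unfolding Fors_def lab_def by auto
      thus False using F unfolding Fors_def by auto
    qed
    thus "F \<in> {{}}" by simp
  qed
  show "{{}} \<subseteq> Fors d {}" unfolding Fors_def vf_def lab_def disjoint_family_on_def by auto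
qed

lemma PS_main:
  assumes X: "finite X" and d: "d \<ge> 1"
  shows "PS d X j = (if card X = j then 1 else 0)"
  using X
proof (induction "card X" arbitrary: X j rule: less_induct)
  case less
  show ?case
  proof (cases "X = {}")
    case True
    have "grp d {} j = {P. P = {} \<and> card P = j \<and> (\<forall>G\<in>P. card G \<in> Sd d)}"
      unfolding grp_def partition_on_empty ..
    also have "\<dots> = (if j = 0 then {{}} else {})" by auto
    finally have "grp d {} j = (if j = 0 then {{}} else {})" .
    moreover have "Pairs d X j = Pair {} ` grp d {} j"
      unfolding Pairs_def True Fors_empty by blast
    ultimately have "Pairs d X j = (if j = 0 then {({}, {})} else {})" by simp
    thus ?thesis unfolding PS_def using True by (simp add: sgnF_def)
  next
    case False
    then obtain a where a: "a \<in> X" by blast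
    let ?G = "{p\<in>Pairs d X j. {Leaf a} \<in> snd p}"
    let ?B = "{p\<in>Pairs d X j. {Leaf a} \<notin> snd p}"
    have fin: "finite (Pairs d X j)" using Pairs_fin[OF less.prems d] .
    have "PS d X j = (\<Sum>p\<in>?G \<union> ?B. sgnF (fst p))" unfolding PS_def
      by (rule sum.cong) auto
    also have "\<dots> = (\<Sum>p\<in>?G. sgnF (fst p)) + (\<Sum>p\<in>?B. sgnF (fst p))"
      by (rule sum.union_disjoint) (use fin in auto)
    also have "(\<Sum>p\<in>?B. sgnF (fst p)) = 0" by (rule bad_sum_zero[OF less.prems d a])
    finally have e: "PS d X j = (\<Sum>p\<in>?G. sgnF (fst p))" by simp
    have cX: "card X \<ge> 1" using less.prems False by (simp add: Suc_le_eq card_gt_0_iff)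
    show ?thesis
    proof (cases "j = 0")
      case True
      have eG: "?G = {}"
      proof (rule ccontr)
        assume "?G \<noteq> {}"
        then obtain F P where "(F, P) \<in> Pairs d X j" "{Leaf a} \<in> P" by auto
        hence "partition_on F P" "card P = 0" "finite F" unfolding Pairs_def grp_def Fors_def vf_def
          using True by auto
        hence "P = {}" using finite_elements by fastforce
        thus False using \<open>{Leaf a} \<in> P\<close> by simp
      qed
      show ?thesis using e[unfolded eG] True cX by simp
    next
      case False
      have "(\<Sum>p\<in>?G. sgnF (fst p)) = PS d (X - {a}) (j - 1)"
        by (rule good_sum[OF less.prems d a]) (use False in simp)
      also have "\<dots> = (if card (X - {a}) = j - 1 then 1 else 0)"
        by (rule less.hyps) (use less.prems a cX in auto)
      also have "card (X - {a}) = card X - 1" using less.prems a by simp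
      finally show ?thesis using e False cX by auto
    qed
  qed
qed

lemma forest_count:
  assumes F: "F \<in> Fors d X"
  shows "card X = card F + d * (\<Sum>t\<in>F. nodes t)"
proof -
  have vF: "vf d F" and lF: "lab F = X" using F unfolding Fors_def by auto
  have finF: "finite F" using vF unfolding vf_def by simp
  have "card X = card (\<Union>t\<in>F. set (leaves t))" using lF unfolding lab_def by simp
  also have "\<dots> = (\<Sum>t\<in>F. card (set (leaves t)))"
    by (rule card_UN_disjoint) (use finF vf_disj[OF vF] in auto)
  also have "\<dots> = (\<Sum>t\<in>F. 1 + d * nodes t)"
  proof (rule sum.cong)
    fix t assume t: "t \<in> F"
    have "distinct (leaves t)" "good_tree d t" using vF t unfolding vf_def by auto
    thus "card (set (leaves t)) = 1 + d * nodes t" using len_leaves by (simp add: distinct_card)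
  qed simp
  also have "\<dots> = (\<Sum>t\<in>F. 1) + (\<Sum>t\<in>F. d * nodes t)" by (rule sum.distrib)
  also have "\<dots> = card F + d * (\<Sum>t\<in>F. nodes t)" by (simp add: sum_distrib_left)
  finally show ?thesis .
qed

lemma grp_fin: "finite F \<Longrightarrow> finite (grp d F j)"
proof -
  assume "finite F"
  hence "finite (Pow (Pow F))" by simp
  moreover have "grp d F j \<subseteq> Pow (Pow F)" unfolding grp_def partition_on_def by auto
  ultimately show ?thesis using finite_subset by blast
qed

definition TF :: "nat \<Rightarrow> nat \<Rightarrow> nat \<Rightarrow> int" where
  "TF d i l = (\<Sum>F\<in>{F\<in>Fors d {1..i}. card F = l}. sgnF F)"

lemma TF_zero: "i < l \<Longrightarrow> TF d i l = 0"
proof -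
  assume il: "i < l"
  have e: "{F\<in>Fors d {1..i}. card F = l} = {}"
  proof (rule ccontr)
    assume "{F\<in>Fors d {1..i}. card F = l} \<noteq> {}"
    then obtain F where "F \<in> Fors d {1..i}" "card F = l" by blast
    thus False using forest_count[of F d "{1..i}"] il by simp
  qed
  show ?thesis unfolding TF_def e by simp
qed

lemma TF_inv:
  assumes d: "d \<ge> 1" and i: "1 \<le> i" and j: "1 \<le> j"
  shows "(\<Sum>l\<in>{1..i}. TF d i l * int (stirS (Sd d) l j)) = (if i = j then 1 else 0)"
proof -
  let ?A = "Fors d {1..i}"
  have finA: "finite ?A" using Fors_fin[of "{1..i}" d] d by simp
  have cardA: "card F \<in> {1..i}" if "F \<in> ?A" for F
  proof -
    have "card F \<le> i" using forest_count[OF that] by simp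
    moreover have "F \<noteq> {}" using that i unfolding Fors_def lab_def by auto
    moreover have "finite F" using that unfolding Fors_def vf_def by simp
    ultimately show ?thesis by (simp add: Suc_le_eq card_gt_0_iff)
  qed
  have "(\<Sum>l\<in>{1..i}. TF d i l * int (stirS (Sd d) l j))
      = (\<Sum>l\<in>{1..i}. \<Sum>F\<in>{F\<in>?A. card F = l}. sgnF F * int (stirS (Sd d) (card F) j))"
    unfolding TF_def by (simp add: sum_distrib_right)
  also have "\<dots> = (\<Sum>F\<in>?A. sgnF F * int (stirS (Sd d) (card F) j))"
    by (rule sum.group) (use finA cardA in auto)
  also have "\<dots> = (\<Sum>F\<in>?A. \<Sum>P\<in>grp d F j. sgnF F)"
  proof (rule sum.cong)
    fix F assume F: "F \<in> ?A"
    have fF: "finite F" using F unfolding Fors_def vf_def by simp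
    have "stirS (Sd d) (card F) j = card (grp d F j)"
      unfolding grp_def using part_count_stirS[OF fF, of j "Sd d"] by simp
    thus "sgnF F * int (stirS (Sd d) (card F) j) = (\<Sum>P\<in>grp d F j. sgnF F)" by simp
  qed simp
  also have "\<dots> = (\<Sum>(F, P)\<in>Sigma ?A (\<lambda>F. grp d F j). sgnF F)"
    by (rule sum.Sigma) (use finA grp_fin in \<open>auto simp: Fors_def vf_def\<close>)
  also have "\<dots> = PS d {1..i} j"
    unfolding PS_def Pairs_def by (rule sum.cong) auto
  also have "\<dots> = (if i = j then 1 else 0)" using PS_main[of "{1..i}" d j] d by simp
  finally show ?thesis .
qed

lemma S1: "1 \<in> Sd d" by (auto intro: exI[of _ 0])

lemma stir_forest:
  assumes d: "d \<ge> 1" and n: "n \<ge> 1"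
  shows "stir_inv (Sd d) n (int n - int (k * d)) = (-1) ^ k * int (card (good_forests n d k))"
proof (cases "k * d < n")
  case False
  have e: "good_forests n d k = {}"
  proof (rule ccontr)
    assume "good_forests n d k \<noteq> {}"
    then obtain F where F: "F \<in> good_forests n d k" by blast
    hence c: "int (card F) = int n - int (k * d)" and fF: "finite F" unfolding good_forests_def by auto
    have "n \<le> k * d" using False by simp
    hence "int n \<le> int (k * d)" by (simp only: of_nat_le_iff)
    hence "card F = 0" using c by linarith
    hence "F = {}" using fF by simp
    thus False using F n unfolding good_forests_def by auto
  qed
  have "n \<le> k * d" using False by simp
  hence "int n \<le> int (k * d)" by (simp only: of_nat_le_iff)
  hence "int n - int (k * d) \<le> 0" by simp
  thus ?thesis unfolding e stir_inv_def by simp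
next
  case True
  define m where "m = n - k * d"
  have m1: "m \<ge> 1" using True unfolding m_def by simp
  have im: "int n - int (k * d) = int m" using True unfolding m_def by simp
  have "stir_inv (Sd d) n (int m) = T0 (Sd d) n m" using stir_inv_T0[OF S1[of d], of "int m" n] m1 by simp
  also have "\<dots> = TF d n m"
    by (rule left_inv_T0[OF S1[of d] TF_zero TF_inv[OF d], symmetric]) (use n m1 in auto)
  also have "\<dots> = (\<Sum>F\<in>{F\<in>Fors d {1..n}. card F = m}. (-1) ^ k)"
    unfolding TF_def
  proof (rule sum.cong)
    fix F assume F: "F \<in> {F\<in>Fors d {1..n}. card F = m}"
    have "n = m + d * (\<Sum>t\<in>F. nodes t)" using forest_count[of F d "{1..n}"] F by simp
    hence "d * (\<Sum>t\<in>F. nodes t) = k * d" using True unfolding m_def by linarith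
    hence "d * (\<Sum>t\<in>F. nodes t) = d * k" by (simp add: mult.commute)
    hence "(\<Sum>t\<in>F. nodes t) = k" using d by simp
    thus "sgnF F = (-1) ^ k" unfolding sgnF_def sg_def power_sum[symmetric] by simp
  qed simp
  also have "\<dots> = (-1) ^ k * int (card {F\<in>Fors d {1..n}. card F = m})" by simp
  also have "{F\<in>Fors d {1..n}. card F = m} = good_forests n d k"
    unfolding Fors_def vf_def lab_def good_forests_def im by auto
  finally show ?thesis unfolding im .
qed

lemma Pi_card_pos: "n \<ge> 1 \<Longrightarrow> x \<in> Pi1d n d \<Longrightarrow> card x \<ge> 1"
  using part_card_pos[of "{1..n}" x] Pi_part by auto

lemma rank_set:
  assumes d: "d \<ge> 1" and r: "rank_fun (Pi1d n d) Defs.refines (singletons n) \<rho>"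
  shows "{x\<in>Pi1d n d. \<rho> x = k} = {x\<in>Pi1d n d. card x + k * d = n}"
proof -
  have "\<rho> x = k \<longleftrightarrow> card x + k * d = n" if x: "x \<in> Pi1d n d" for x
  proof -
    have r1: "\<rho> x = (n - card x) div d" using rank_eq[OF d r x] .
    obtain q where q: "n - card x = d * q" using Pi_dvd[OF x] by (auto elim: dvdE)
    have le: "card x \<le> n" using Pi_card_le[OF x] .
    have "\<rho> x = q" using r1 q d by simp
    moreover have "card x + k * d = n \<longleftrightarrow> d * q = d * k" using q le by (auto simp: mult.commute)
    ultimately show ?thesis using d by simp
  qed
  thus ?thesis by blast
qed

lemma rank_empty:
  assumes "n \<ge> 1" "\<not> k * d < n"
  shows "{x\<in>Pi1d n d. card x + k * d = n} = {}"
  using Pi_card_pos[OF assms(1)] assms(2) by fastforce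

lemma Pi_cardset:
  assumes d: "d \<ge> 1"
  shows "{x\<in>Pi1d n d. card x = m} = {P. partition_on {1..n} P \<and> card P = m \<and> (\<forall>B\<in>P. card B \<in> Sd d)}"
proof -
  have "(card B \<in> Sd d) \<longleftrightarrow> card B mod d = 1 mod d" if P: "partition_on {1..n} P" and B: "B \<in> P" for P B
  proof -
    have "finite B" using part_fin_block[OF _ P B] by simp
    moreover have "B \<noteq> {}" using part_ne_block[OF P B] .
    ultimately have "card B \<ge> 1" by (simp add: Suc_le_eq card_gt_0_iff)
    thus ?thesis using memS by blast
  qed
  thus ?thesis unfolding Pi1d_def by blast
qed

lemma Wk:
  assumes d: "d \<ge> 1" and n: "n \<ge> 1"
  shows "int (card {x\<in>Pi1d n d. card x + k * d = n}) = stirS_int (Sd d) n (int n - int (k * d))"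
proof (cases "k * d < n")
  case False
  have "n \<le> k * d" using False by simp
  hence "int n \<le> int (k * d)" by (simp only: of_nat_le_iff)
  hence "int n - int (k * d) \<le> 0" by simp
  thus ?thesis unfolding rank_empty[OF n False] stirS_int_def by simp
next
  case True
  define m where "m = n - k * d"
  have m1: "m \<ge> 1" using True unfolding m_def by simp
  have im: "int n - int (k * d) = int m" using True unfolding m_def by simp
  have e: "{x\<in>Pi1d n d. card x + k * d = n} = {x\<in>Pi1d n d. card x = m}"
    unfolding m_def using True by auto
  show ?thesis unfolding im e Pi_cardset[OF d] stirS_int_def stirS_def using m1 by simp
qed

lemma Mk:
  assumes d: "d \<ge> 1" and n: "n \<ge> 1"
  shows "(\<Sum>x\<in>{x\<in>Pi1d n d. card x + k * d = n}. mobius (Pi1d n d) Defs.refines (singletons n) x)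
       = stir_inv (Sd d) n (int n - int (k * d))"
proof (cases "k * d < n")
  case False
  have "n \<le> k * d" using False by simp
  hence "int n \<le> int (k * d)" by (simp only: of_nat_le_iff)
  hence "int n - int (k * d) \<le> 0" by simp
  thus ?thesis unfolding rank_empty[OF n False] stir_inv_def by simp
next
  case True
  define m where "m = n - k * d"
  have m1: "m \<ge> 1" using True unfolding m_def by simp
  have im: "int n - int (k * d) = int m" using True unfolding m_def by simp
  have e: "{x\<in>Pi1d n d. card x + k * d = n} = {x\<in>Pi1d n d. card x = m}"
    unfolding m_def using True by auto
  have "stir_inv (Sd d) n (int m) = T0 (Sd d) n m" using stir_inv_T0[OF S1[of d], of "int m" n] m1 by simp
  also have "\<dots> = MobL d n m"
    by (rule left_inv_T0[OF S1[of d] MobL_zero MobL_inv[OF d], symmetric]) (use n m1 in auto)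
  finally show ?thesis unfolding im e MobL_def by simp
qed

theorem theorem1p2:
  fixes n d k :: nat
  assumes "n \<ge> 1" and "d \<ge> 1"
  shows "ranked (Pi1d n d) refines (singletons n) \<and>
    (\<forall>\<rho>. rank_fun (Pi1d n d) refines (singletons n) \<rho> \<longrightarrow>
       int (card {x \<in> Pi1d n d. \<rho> x = k}) =
         stirS_int {j * d + 1 | j. True} n (int n - int (k * d)) \<and>
       (\<Sum>x\<in>{x \<in> Pi1d n d. \<rho> x = k}. mobius (Pi1d n d) refines (singletons n) x) =
         stir_inv {j * d + 1 | j. True} n (int n - int (k * d))) \<and>
    stir_inv {j * d + 1 | j. True} n (int n - int (k * d)) =
      (-1) ^ k * int (card (good_forests n d k))"
proof (intro conjI allI impI)
  show "ranked (Pi1d n d) refines (singletons n)"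
    unfolding ranked_def using ranked_Pi[OF assms(2)] by blast
  fix \<rho> assume r: "rank_fun (Pi1d n d) refines (singletons n) \<rho>"
  show "int (card {x \<in> Pi1d n d. \<rho> x = k}) = stirS_int {j * d + 1 | j. True} n (int n - int (k * d))"
    unfolding rank_set[OF assms(2) r] by (rule Wk[OF assms(2,1)])
  show "(\<Sum>x\<in>{x \<in> Pi1d n d. \<rho> x = k}. mobius (Pi1d n d) refines (singletons n) x) =
         stir_inv {j * d + 1 | j. True} n (int n - int (k * d))"
    unfolding rank_set[OF assms(2) r] by (rule Mk[OF assms(2,1)])
next
  show "stir_inv {j * d + 1 | j. True} n (int n - int (k * d)) = (-1) ^ k * int (card (good_forests n d k))"
    by (rule stir_forest[OF assms(2,1)])
qed

end
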